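(* Let $\mathfrak D=(\mathfrak D^p_{m,m-1})_{p\ge0,m\ge1}$ be the Courant–Dorfman algebra of differential operators of a Courant algebroid $E$. Then $\mathfrak D$ is a graded subalgebra of $(\mathcal A,\cdot)$; more precisely, for $\omega\in\mathfrak D^p_{m,m-1}$ and $\eta\in\mathfrak D^q_{n,n-1}$, one has $\omega\cdot\eta\in\mathfrak D^{p+q}_{\max\{m,n\},\max\{m,n\}-1}$.
   Context: Let $M$ be a smooth manifold, $\mathcal R=C^\infty(M)$, $\Omega^1=\Gamma(T^*M)$, and $(E,[\![\cdot,\cdot]\!],\langle\cdot,\cdot\rangle,\rho)$ a Courant algebroid over $M$; $\mathcal E=\Gamma(E)$. Cochains. For $p\ge1$ a $p$-cochain is a tuple $\omega=(\omega_0,\dots,\omega_{[p/2]})$ of $\mathbb R$-multilinear maps $\omega_k:\mathcal E^{\otimes(p-2k)}\otimes(\Omega^1)^{\otimes k}\to\mathcal R$, symmetric in the $\Omega^1$-arguments, such that for $1\le i<p-2k$: $\omega_k(\dots,e_i,e_{i+1},\dots;\alpha_1,\dots,\alpha_k)+\omega_k(\dots,e_{i+1},e_i,\dots;\alpha_1,\dots,\alpha_k)=-\omega_{k+1}(\dots,\widehat{e_i},\widehat{e_{i+1}},\dots;d\langle e_i,e_{i+1}\rangle,\alpha_1,\dots,\alpha_k)$. $0$-cochains are elements of $\mathcal R$. They form the graded algebra $\mathcal A$ with product: for $\omega$ of degree $p$, $\eta$ of degree $q$, $(\omega\cdot\eta)_k(e_1,\dots,e_{p+q-2k};\alpha_1,\dots,\alpha_k)=\sum_{i+j=k,\,i\le[p/2],\,j\le[q/2]}\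 \sum_{\sigma\in sh(p-2i,q-2j)}\sum_{\tau\in sh(i,j)}(-1)^{|\sigma|}\omega_i(e_{\sigma(1)},\dots,e_{\sigma(p-2i)};\alpha_{\tau(1)},\dots,\alpha_{\tau(i)})\,\eta_j(e_{\sigma(p-2i+1)},\dots,e_{\sigma(p+q-2k)};\alpha_{\tau(i+1)},\dots,\alpha_{\tau(k)})$ ($sh(a,b)$ = $(a,b)$-shuffles). Differential operators: an $\mathbb R$-multilinear map has order $\le0$ in a given argument if it is $\mathcal R$-linear in it, and order $\le s$ in that argument if for every $f\in\mathcal R$ its symbol (the map obtained by replacing that argument $x$ by $fx$ and subtracting $f$ times the original value) has order $\le s-1$ in that argument. For $m\ge1$ and $p\ge2$, $\mathfrak D^p_{m,m-1}$ is the set of $p$-cochains such that each $\omega_k$ has order $\le m$ in each $\Omega^1$-argument, order $\le m$ in each of the first $p-2k-1$ $\mathcal E$-arguments and order $\le m-1$ in the last $\mathcal E$-argument; for $p=1$, $\mathfrak D^1_m$ consists of $\omega=(\omega_0)$ with $\omega_0$ of order $\le m$ in its unique argument; $\mathfrak D^0=\mathcal R$.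
   Formalization: A 1-cochain $\omega=(\omega_0)$ lies in $\mathfrak D^1_{m,m-1}$ only when $\omega_0$ has order at most m-1 in its unique argument, rather than order at most m as for $\mathfrak D^1_m$. The statement above fails without it. *)

theory Defs
  imports Complex_Main "HOL-Combinatorics.Permutations" "HOL-Library.Multiset"
begin

text \<open>Algebraic data underlying the cochain algebra of a Courant algebroid:
  R = C-infinity(M) (a commutative real algebra), the R-modules of sections of E and of
  1-forms (with scalar multiplications sE, sO), the de Rham differential d : R -> Omega^1
  (an R-valued derivation, real linear) and the symmetric R-bilinear pairing.\<close>

definition CD_data ::
  "('r::{comm_ring_1,real_algebra_1} \<Rightarrow> 'e::ab_group_add \<Rightarrow> 'e) \<Rightarrow> ('r \<Rightarrow> 'o::ab_group_add \<Rightarrow> 'o)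
   \<Rightarrow> ('r \<Rightarrow> 'o) \<Rightarrow> ('e \<Rightarrow> 'e \<Rightarrow> 'r) \<Rightarrow> bool" where
  "CD_data sE sO d pair \<longleftrightarrow>
     module sE \<and> module sO \<and>
     (\<forall>f g. d (f + g) = d f + d g) \<and>
     (\<forall>c f. d (scaleR c f) = sO (of_real c) (d f)) \<and>
     (\<forall>f g. d (f * g) = sO f (d g) + sO g (d f)) \<and>
     (\<forall>x y. pair x y = pair y x) \<and>
     (\<forall>x y z. pair (x + y) z = pair x z + pair y z) \<and>
     (\<forall>f x y. pair (sE f x) y = f * pair x y)"

definition shuffles :: "nat \<Rightarrow> nat \<Rightarrow> (nat \<Rightarrow> nat) set" where
  "shuffles a b = {\<sigma>. \<sigma> permutes {0..<a+b} \<and> strict_mono_on {0..<a} \<sigma> \<and> strict_mono_on {a..<a+b} \<sigma>}"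

text \<open>A p-cochain is represented by k \<mapsto> omega_k, omega_k taking a list of p-2k sections
  and a list of k one-forms (only k \<le> p div 2 and these lengths are relevant).
  A 0-cochain f corresponds to omega 0 [] [] = f.\<close>
definition is_cochain ::
  "('r::{comm_ring_1,real_algebra_1} \<Rightarrow> 'e::ab_group_add \<Rightarrow> 'e) \<Rightarrow> ('r \<Rightarrow> 'o::ab_group_add \<Rightarrow> 'o)
   \<Rightarrow> ('r \<Rightarrow> 'o) \<Rightarrow> ('e \<Rightarrow> 'e \<Rightarrow> 'r) \<Rightarrow> nat \<Rightarrow> (nat \<Rightarrow> 'e list \<Rightarrow> 'o list \<Rightarrow> 'r) \<Rightarrow> bool" where
  "is_cochain sE sO d pair p \<omega> \<longleftrightarrow>
    (\<forall>k \<le> p div 2. \<forall>es as. length es = p - 2*k \<and> length as = k \<longrightarrow>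
       (\<forall>i < length es.
          (\<forall>x y. \<omega> k (es[i := x + y]) as = \<omega> k (es[i := x]) as + \<omega> k (es[i := y]) as) \<and>
          (\<forall>c x. \<omega> k (es[i := sE (of_real c) x]) as = of_real c * \<omega> k (es[i := x]) as)) \<and>
       (\<forall>i < length as.
          (\<forall>x y. \<omega> k es (as[i := x + y]) = \<omega> k es (as[i := x]) + \<omega> k es (as[i := y])) \<and>
          (\<forall>c x. \<omega> k es (as[i := sO (of_real c) x]) = of_real c * \<omega> k es (as[i := x]))) \<and>
       (\<forall>as'. mset as' = mset as \<longrightarrow> \<omega> k es as' = \<omega> k es as) \<and>
       (\<forall>i. i + 1 < p - 2*k \<longrightarrow>
          \<omega> k es as + \<omega> k (es[i := es ! (i+1), i+1 := es ! i]) as =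
          - \<omega> (k+1) (take i es @ drop (i+2) es) (d (pair (es ! i) (es ! (i+1))) # as)))"

fun has_order :: "('r::comm_ring_1 \<Rightarrow> 'x \<Rightarrow> 'x) \<Rightarrow> nat \<Rightarrow> ('x \<Rightarrow> 'r) \<Rightarrow> bool" where
  "has_order sc 0 F = (\<forall>f x. F (sc f x) = f * F x)"
| "has_order sc (Suc s) F = (\<forall>f. has_order sc s (\<lambda>x. F (sc f x) - f * F x))"

definition in_D ::
  "('r::{comm_ring_1,real_algebra_1} \<Rightarrow> 'e::ab_group_add \<Rightarrow> 'e) \<Rightarrow> ('r \<Rightarrow> 'o::ab_group_add \<Rightarrow> 'o)
   \<Rightarrow> ('r \<Rightarrow> 'o) \<Rightarrow> ('e \<Rightarrow> 'e \<Rightarrow> 'r) \<Rightarrow> nat \<Rightarrow> nat \<Rightarrow> (nat \<Rightarrow> 'e list \<Rightarrow> 'o list \<Rightarrow> 'r) \<Rightarrow> bool" where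
  "in_D sE sO d pair p m \<omega> \<longleftrightarrow> is_cochain sE sO d pair p \<omega> \<and>
    (\<forall>k \<le> p div 2. \<forall>es as. length es = p - 2*k \<and> length as = k \<longrightarrow>
       (\<forall>i < length as. has_order sO m (\<lambda>a. \<omega> k es (as[i := a]))) \<and>
       (\<forall>i < length es. has_order sE (if i + 1 = length es then m - 1 else m) (\<lambda>x. \<omega> k (es[i := x]) as)))"

definition cprod ::
  "nat \<Rightarrow> (nat \<Rightarrow> 'e list \<Rightarrow> 'o list \<Rightarrow> 'r::comm_ring_1) \<Rightarrow> nat \<Rightarrow> (nat \<Rightarrow> 'e list \<Rightarrow> 'o list \<Rightarrow> 'r)
   \<Rightarrow> nat \<Rightarrow> 'e list \<Rightarrow> 'o list \<Rightarrow> 'r" where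
  "cprod p \<omega> q \<eta> k es as =
    (\<Sum>i | i \<le> k \<and> i \<le> p div 2 \<and> k - i \<le> q div 2.
      \<Sum>\<sigma>\<in>shuffles (p - 2*i) (q - 2*(k-i)). \<Sum>\<tau>\<in>shuffles i (k-i).
        of_int (sign \<sigma>) *
        \<omega> i (map (\<lambda>l. es ! \<sigma> l) [0..<p - 2*i]) (map (\<lambda>l. as ! \<tau> l) [0..<i]) *
        \<eta> (k-i) (map (\<lambda>l. es ! \<sigma> l) [p - 2*i..<p + q - 2*k]) (map (\<lambda>l. as ! \<tau> l) [i..<k]))"

end

theory Submission
  imports Defs
begin
definition SS :: "nat \<Rightarrow> nat \<Rightarrow> nat set set" where
  "SS N a = {S. S \<subseteq> {..<N} \<and> card S = a}"

definition ps :: "nat \<Rightarrow> nat set \<Rightarrow> int" where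
  "ps a S = (-1) ^ (\<Sum>S + \<Sum>{..<a})"

lemma finite_SS[simp]: "finite (SS N a)"
proof -
  have "SS N a \<subseteq> Pow {..<N}" unfolding SS_def by auto
  thus ?thesis by (rule finite_subset) auto
qed

lemma nths_restrict: "nths xs A = nths xs (A \<inter> {..<length xs})"
  unfolding nths_def
  by (rule arg_cong[where f="map fst"], rule filter_cong) (auto simp: set_zip)

lemma nths_cong_restr: "A \<inter> {..<length xs} = B \<inter> {..<length xs} \<Longrightarrow> nths xs A = nths xs B"
  by (metis nths_restrict)

lemma nths_insert_last:
  assumes "\<forall>x\<in>A. x < m" "m < length xs"
  shows "nths xs (insert m A) = nths xs A @ [xs!m]"
proof -
  have xs: "xs = take m xs @ (xs!m # drop (Suc m) xs)"
    using assms(2) by (simp add: id_take_nth_drop)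
  have e1: "nths (drop (Suc m) xs) {j. Suc j + length (take m xs) \<in> insert m A} = []"
    by (rule trans[OF nths_cong_restr[where B="{}"]]) (use assms in auto)
  have e2: "nths (drop (Suc m) xs) {j. Suc j + length (take m xs) \<in> A} = []"
    by (rule trans[OF nths_cong_restr[where B="{}"]]) (use assms in auto)
  have e3: "nths (take m xs) (insert m A) = nths (take m xs) A"
    by (rule nths_cong_restr) (use assms in auto)
  have L: "nths xs (insert m A) = nths (take m xs) A @ [xs!m]"
  proof -
    have "nths xs (insert m A) = nths (take m xs) (insert m A) @ nths (xs!m # drop (Suc m) xs) {j. j + length (take m xs) \<in> insert m A}"
      by (subst xs, subst nths_append) simp
    thus ?thesis using e1 e3 assms(2) by (simp add: nths_Cons)
  qed
  have "nths xs A = nths (take m xs) A @ nths (xs!m # drop (Suc m) xs) {j. j + length (take m xs) \<in> A}"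
    by (subst xs, subst nths_append) simp
  moreover have "m \<notin> A" using assms by auto
  ultimately have "nths xs A = nths (take m xs) A"
    using e2 assms(2) by (simp add: nths_Cons)
  with L show ?thesis by simp
qed

lemma map_smono_nths:
  assumes "strict_mono_on {c..<c+a} \<sigma>" "\<forall>l\<in>{c..<c+a}. \<sigma> l < length xs"
  shows "map (\<lambda>l. xs ! \<sigma> l) [c..<c+a] = nths xs (\<sigma> ` {c..<c+a})"
  using assms
proof (induction a)
  case 0
  then show ?case by simp
next
  case (Suc a)
  have sm: "strict_mono_on {c..<c+a} \<sigma>"
    using Suc.prems(1) by (auto simp: strict_mono_on_def)
  have IH: "map (\<lambda>l. xs ! \<sigma> l) [c..<c+a] = nths xs (\<sigma> ` {c..<c+a})"
    using Suc sm by auto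
  have im: "\<sigma> ` {c..<c+Suc a} = insert (\<sigma> (c+a)) (\<sigma> ` {c..<c+a})"
    by (auto simp: less_Suc_eq)
  have lt: "\<forall>x\<in>\<sigma> ` {c..<c+a}. x < \<sigma> (c+a)"
    using Suc.prems(1) by (auto simp: strict_mono_on_def)
  have "\<sigma> (c+a) < length xs" using Suc.prems(2) by simp
  note e = nths_insert_last[OF lt this]
  show ?case
    unfolding im e IH[symmetric] by simp
qed

lemma smono_list:
  fixes \<sigma> :: "nat \<Rightarrow> 'a::linorder"
  assumes "strict_mono_on {c..<c+a} \<sigma>"
  shows "map \<sigma> [c..<c+a] = sorted_list_of_set (\<sigma> ` {c..<c+a})"
proof -
  have inj: "inj_on \<sigma> {c..<c+a}" using assms strict_mono_on_imp_inj_on by blast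
  have "sorted_wrt (<) (map \<sigma> [c..<c+a])"
    unfolding sorted_wrt_map
    by (rule sorted_wrt_mono_rel[OF _ sorted_wrt_upt])
       (use assms in \<open>auto simp: strict_mono_on_def\<close>)
  moreover have "length (map \<sigma> [c..<c+a]) = card (\<sigma> ` {c..<c+a})"
    using card_image[OF inj] by simp
  ultimately show ?thesis
    using sorted_list_of_set_unique[of "\<sigma> ` {c..<c+a}" "map \<sigma> [c..<c+a]"] by auto
qed

lemma smono_eq:
  fixes \<sigma> \<sigma>' :: "nat \<Rightarrow> nat" and c a l :: nat
  assumes "strict_mono_on {c..<c+a} \<sigma>" "strict_mono_on {c..<c+a} \<sigma>'"
    "\<sigma> ` {c..<c+a} = \<sigma>' ` {c..<c+a}" "l \<in> {c..<c+a}"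
  shows "\<sigma> l = \<sigma>' l"
proof -
  have "map \<sigma> [c..<c+a] = map \<sigma>' [c..<c+a]"
    using smono_list[OF assms(1)] smono_list[OF assms(2)] assms(3) by simp
  hence "map \<sigma> [c..<c+a] ! (l - c) = map \<sigma>' [c..<c+a] ! (l - c)" by metis
  moreover have "map \<sigma> [c..<c+a] ! (l - c) = \<sigma> l" "map \<sigma>' [c..<c+a] ! (l - c) = \<sigma>' l"
    using assms(4) by auto
  ultimately show ?thesis by simp
qed

lemma shuffle_facts:
  assumes "\<sigma> \<in> shuffles a b"
  shows "\<sigma> permutes {0..<a+b}" "strict_mono_on {0..<0+a} \<sigma>" "strict_mono_on {a..<a+b} \<sigma>"
    "\<sigma> ` {a..<a+b} = {..<a+b} - \<sigma> ` {..<a}"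
    "\<sigma> ` {..<a} \<in> SS (a+b) a"
proof -
  show p: "\<sigma> permutes {0..<a+b}" "strict_mono_on {0..<0+a} \<sigma>" "strict_mono_on {a..<a+b} \<sigma>"
    using assms unfolding shuffles_def by auto
  have inj: "inj_on \<sigma> {0..<a+b}" using p(1) permutes_inj_on by blast
  have im: "\<sigma> ` {0..<a+b} = {0..<a+b}" using p(1) permutes_image by blast
  have u: "{0..<a+b} = {..<a} \<union> {a..<a+b}" by auto
  have "\<sigma> ` {a..<a+b} = \<sigma> ` ({0..<a+b} - {..<a})" by (rule arg_cong[where f="image \<sigma>"]) auto
  also have "\<dots> = {..<a+b} - \<sigma> ` {..<a}"
    by (subst inj_on_image_set_diff[OF inj]) (use im in auto)
  finally show "\<sigma> ` {a..<a+b} = {..<a+b} - \<sigma> ` {..<a}" .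
  have "inj_on \<sigma> {..<a}" using inj by (rule inj_on_subset) auto
  thus "\<sigma> ` {..<a} \<in> SS (a+b) a"
    unfolding SS_def using im by (auto simp: card_image)
qed

lemma shuffle_inj: "inj_on (\<lambda>\<sigma>. \<sigma> ` {..<a}) (shuffles a b)"
proof (rule inj_onI)
  fix \<sigma> \<sigma>' assume s: "\<sigma> \<in> shuffles a b" "\<sigma>' \<in> shuffles a b" and e: "\<sigma> ` {..<a} = \<sigma>' ` {..<a}"
  note f = shuffle_facts[OF s(1)] and f' = shuffle_facts[OF s(2)]
  show "\<sigma> = \<sigma>'"
  proof
    fix l
    show "\<sigma> l = \<sigma>' l"
    proof (cases "l < a")
      case True
      then show ?thesis using smono_eq[OF f(2) f'(2)] e by (simp add: atLeast0LessThan)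
    next
      case False
      show ?thesis
      proof (cases "l < a + b")
        case True
        then show ?thesis using smono_eq[OF f(3) f'(3)] e f(4) f'(4) False by simp
      next
        case False
        then show ?thesis using permutes_not_in[OF f(1)] permutes_not_in[OF f'(1)] by simp
      qed
    qed
  qed
qed


lemma shuffle_surj:
  assumes "S \<in> SS (a+b) a"
  shows "\<exists>\<sigma>\<in>shuffles a b. \<sigma> ` {..<a} = S"
proof -
  let ?C = "{..<a+b} - S"
  define Ls where "Ls = sorted_list_of_set S"
  define Lc where "Lc = sorted_list_of_set ?C"
  have fS: "finite S" "card S = a" "S \<subseteq> {..<a+b}" using assms unfolding SS_def
    by (auto intro: finite_subset)
  have cC: "card ?C = b" using card_Diff_subset[OF fS(1) fS(3)] fS(2) by simp
  have lL: "length Ls = a" "length Lc = b" unfolding Ls_def Lc_def using fS cC by auto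
  have sL: "set Ls = S" "set Lc = ?C" unfolding Ls_def Lc_def using fS by auto
  have soL: "sorted_wrt (<) Ls" "sorted_wrt (<) Lc" unfolding Ls_def Lc_def
    by (auto intro: strict_sorted_list_of_set)
  define \<sigma> where "\<sigma> l = (if l < a then Ls!l else if l < a+b then Lc!(l-a) else l)" for l
  have im1: "\<sigma> ` {..<a} = S"
  proof -
    have "\<sigma> ` {..<a} = (\<lambda>l. Ls!l) ` {..<a}" by (auto simp: \<sigma>_def)
    also have "\<dots> = set Ls" using lL by (auto simp: set_conv_nth)
    finally show ?thesis using sL by simp
  qed
  have im2: "\<sigma> ` {a..<a+b} = ?C"
  proof -
    have "\<sigma> ` {a..<a+b} = (\<lambda>l. Lc!(l-a)) ` {a..<a+b}" by (auto simp: \<sigma>_def)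
    also have "\<dots> = (\<lambda>l. Lc!l) ` {..<b}"
    proof (rule set_eqI, rule iffI)
      fix z assume "z \<in> (\<lambda>l. Lc!(l-a)) ` {a..<a+b}"
      then obtain l where "l \<in> {a..<a+b}" "z = Lc!(l-a)" by auto
      thus "z \<in> (\<lambda>l. Lc!l) ` {..<b}" by (intro image_eqI[where x="l-a"]) auto
    next
      fix z assume "z \<in> (\<lambda>l. Lc!l) ` {..<b}"
      then obtain l where "l < b" "z = Lc!l" by auto
      thus "z \<in> (\<lambda>l. Lc!(l-a)) ` {a..<a+b}" by (intro image_eqI[where x="l+a"]) auto
    qed
    also have "\<dots> = set Lc" using lL by (auto simp: set_conv_nth)
    finally show ?thesis using sL by simp
  qed
  have imall: "\<sigma> ` {0..<a+b} = {0..<a+b}"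
  proof -
    have "{0..<a+b} = {..<a} \<union> {a..<a+b}" by auto
    hence "\<sigma> ` {0..<a+b} = \<sigma> ` {..<a} \<union> \<sigma> ` {a..<a+b}" by (metis image_Un)
    thus ?thesis using im1 im2 fS(3) by auto
  qed
  have inj: "inj_on \<sigma> {0..<a+b}" by (rule eq_card_imp_inj_on) (use imall in auto)
  have perm: "\<sigma> permutes {0..<a+b}"
    by (rule bij_imp_permutes) (simp_all add: bij_betw_def inj imall, simp add: \<sigma>_def)
  have m1: "strict_mono_on {0..<a} \<sigma>"
    unfolding strict_mono_on_def \<sigma>_def using soL(1) lL by (auto intro: sorted_wrt_nth_less)
  have m2: "strict_mono_on {a..<a+b} \<sigma>"
    unfolding strict_mono_on_def
  proof (intro allI impI)
    fix r s assume "r \<in> {a..<a+b} \<and> s \<in> {a..<a+b} \<and> r < s"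
    hence "r - a < s - a" "s - a < length Lc" "\<sigma> r = Lc!(r-a)" "\<sigma> s = Lc!(s-a)"
      using lL by (auto simp: \<sigma>_def)
    thus "\<sigma> r < \<sigma> s" using sorted_wrt_nth_less[OF soL(2)] by simp
  qed
  show ?thesis using perm m1 m2 im1 unfolding shuffles_def by auto
qed

lemma smono_ge:
  assumes "strict_mono_on {0..<a} (\<sigma>::nat\<Rightarrow>nat)" "l < a"
  shows "l \<le> \<sigma> l"
  using assms(2)
proof (induction l)
  case 0 then show ?case by simp
next
  case (Suc l)
  hence "\<sigma> l < \<sigma> (Suc l)" using assms(1) by (auto simp: strict_mono_on_def)
  with Suc show ?case by simp
qed

lemma strict_mono_comp_on:
  assumes "strict_mono_on A (g::nat\<Rightarrow>nat)" "\<forall>u\<in>g`A. \<forall>v\<in>g`A. u < v \<longrightarrow> t u < (t v::nat)"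
  shows "strict_mono_on A (t \<circ> g)"
  using assms unfolding strict_mono_on_def by auto

lemma id_shuffle: "id \<in> shuffles a b"
  unfolding shuffles_def by (auto simp: strict_mono_on_def)

lemma shuffle_sign_aux:
  "\<forall>\<sigma>\<in>shuffles a b. (\<Sum>l<a. \<sigma> l) = D + (\<Sum>l<a. l) \<longrightarrow> sign \<sigma> = (-1)^D"
proof (induction D)
  case 0
  show ?case
  proof (intro ballI impI)
    fix \<sigma> assume s: "\<sigma> \<in> shuffles a b" and sm: "(\<Sum>l<a. \<sigma> l) = 0 + (\<Sum>l<a. l)"
    note f = shuffle_facts[OF s]
    have ge: "\<forall>l<a. l \<le> \<sigma> l" using smono_ge f(2) by simp
    have "(\<Sum>l<a. \<sigma> l - l) = (\<Sum>l<a. \<sigma> l) - (\<Sum>l<a. l)"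
      by (rule sum_subtractf_nat) (use ge in auto)
    hence "(\<Sum>l<a. \<sigma> l - l) = 0" using sm by simp
    hence "\<forall>l<a. \<sigma> l \<le> l" by simp
    hence "\<forall>l<a. \<sigma> l = l" using ge by (auto intro: antisym)
    hence "\<sigma> ` {..<a} = id ` {..<a}" by auto
    from inj_onD[OF shuffle_inj this s id_shuffle] have "\<sigma> = id" .
    thus "sign \<sigma> = (-1)^0" by simp
  qed
next
  case (Suc D)
  show ?case
  proof (intro ballI impI)
    fix \<sigma> assume s: "\<sigma> \<in> shuffles a b" and sm: "(\<Sum>l<a. \<sigma> l) = Suc D + (\<Sum>l<a. l)"
    note f = shuffle_facts[OF s]
    have ge: "\<forall>l<a. l \<le> \<sigma> l" using smono_ge f(2) by simp
    have ex: "\<exists>l. l < a \<and> \<sigma> l \<noteq> l"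
    proof (rule ccontr)
      assume "\<not> ?thesis"
      hence "(\<Sum>l<a. \<sigma> l) = (\<Sum>l<a. l)" by (intro sum.cong) auto
      with sm show False by simp
    qed
    define l0 where "l0 = (LEAST l. l < a \<and> \<sigma> l \<noteq> l)"
    have l0: "l0 < a" "\<sigma> l0 \<noteq> l0" using LeastI_ex[OF ex] unfolding l0_def by auto
    have bel: "\<forall>l<l0. \<sigma> l = l"
      using not_less_Least l0 unfolding l0_def by fastforce
    define x where "x = \<sigma> l0"
    have xg: "l0 < x" using ge l0 unfolding x_def by (simp add: le_neq_implies_less)
    define y where "y = x - 1"
    have xy: "x = Suc y" "l0 \<le> y" using xg unfolding y_def by auto
    have sm1: "strict_mono_on {..<a} \<sigma>" using f(2) by (simp add: atLeast0LessThan)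
    have ny: "y \<notin> \<sigma> ` {..<a}"
    proof
      assume "y \<in> \<sigma> ` {..<a}"
      then obtain l' where l': "l' < a" "\<sigma> l' = y" by auto
      show False
      proof (cases "l' < l0")
        case True thus ?thesis using bel l' xy by auto
      next
        case False
        show ?thesis
        proof (cases "l' = l0")
          case True thus ?thesis using l' xy x_def by auto
        next
          case False
          hence "\<sigma> l0 < \<sigma> l'" using \<open>\<not> l' < l0\<close> l' l0 sm1 by (auto simp: strict_mono_on_def)
          thus ?thesis using l' xy x_def by auto
        qed
      qed
    qed
    have xin: "x \<in> \<sigma> ` {..<a}" using l0 x_def by auto
    have xlt: "x < a + b" using f(4) xin f(5) unfolding SS_def by auto
    define t where "t = transpose y x"
    define \<sigma>' where "\<sigma>' = t \<circ> \<sigma>"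
    have pt: "t permutes {0..<a+b}" unfolding t_def using xlt xy by (intro permutes_swap_id) auto
    have p': "\<sigma>' permutes {0..<a+b}" unfolding \<sigma>'_def using permutes_compose[OF f(1) pt] .
    have ord1: "\<forall>u\<in>\<sigma>`{0..<a}. \<forall>v\<in>\<sigma>`{0..<a}. u < v \<longrightarrow> t u < t v"
    proof (intro ballI impI)
      fix u v assume "u \<in> \<sigma>`{0..<a}" "v \<in> \<sigma>`{0..<a}" "u < v"
      moreover have "u \<noteq> y" "v \<noteq> y" using ny calculation by (auto simp: atLeast0LessThan)
      ultimately show "t u < t v" unfolding t_def using xy
        by (auto simp: transpose_def)
    qed
    have ord2: "\<forall>u\<in>\<sigma>`{a..<a+b}. \<forall>v\<in>\<sigma>`{a..<a+b}. u < v \<longrightarrow> t u < t v"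
    proof (intro ballI impI)
      fix u v assume "u \<in> \<sigma>`{a..<a+b}" "v \<in> \<sigma>`{a..<a+b}" "u < v"
      moreover have "u \<noteq> x" "v \<noteq> x" using xin f(4) calculation by auto
      ultimately show "t u < t v" unfolding t_def using xy
        by (auto simp: transpose_def)
    qed
    have s': "\<sigma>' \<in> shuffles a b"
      unfolding shuffles_def \<sigma>'_def
      using p' strict_mono_comp_on[OF f(2)] strict_mono_comp_on[OF f(3)] ord1 ord2
      by (auto simp: \<sigma>'_def)
    have inj1: "inj_on \<sigma> {..<a}" using sm1 strict_mono_on_imp_inj_on by blast
    have val: "\<forall>l<a. \<sigma>' l = (if l = l0 then y else \<sigma> l)"
    proof (intro allI impI)
      fix l assume "l < a"
      show "\<sigma>' l = (if l = l0 then y else \<sigma> l)"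
      proof (cases "l = l0")
        case True thus ?thesis unfolding \<sigma>'_def t_def x_def by simp
      next
        case False
        have "\<sigma> l \<noteq> x" using inj_onD[OF inj1, of l l0] False \<open>l < a\<close> l0 x_def by auto
        moreover have "\<sigma> l \<noteq> y" using ny \<open>l < a\<close> by auto
        ultimately show ?thesis using False unfolding \<sigma>'_def t_def by simp
      qed
    qed
    have "(\<Sum>l<a. \<sigma> l) = \<sigma> l0 + (\<Sum>l\<in>{..<a}-{l0}. \<sigma> l)"
      using l0 by (subst sum.remove[of _ l0]) auto
    moreover have "(\<Sum>l<a. \<sigma>' l) = \<sigma>' l0 + (\<Sum>l\<in>{..<a}-{l0}. \<sigma>' l)"
      using l0 by (subst sum.remove[of _ l0]) auto
    moreover have "(\<Sum>l\<in>{..<a}-{l0}. \<sigma>' l) = (\<Sum>l\<in>{..<a}-{l0}. \<sigma> l)"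
      using val by (intro sum.cong) auto
    ultimately have "(\<Sum>l<a. \<sigma>' l) = D + (\<Sum>l<a. l)"
      using sm val l0 xy x_def by simp
    hence sg': "sign \<sigma>' = (-1)^D" using Suc.IH s' by blast
    have "\<sigma> = t \<circ> \<sigma>'" unfolding \<sigma>'_def t_def by (rule ext) simp
    moreover have "permutation \<sigma>'" using p' permutation_permutes by blast
    ultimately have "sign \<sigma> = sign t * sign \<sigma>'"
      using sign_compose permutation_swap_id unfolding t_def by metis
    also have "sign t = -1" unfolding t_def using xy by (simp add: sign_swap_id)
    finally show "sign \<sigma> = (-1)^Suc D" using sg' by simp
  qed
qed

lemma shuffle_sign:
  assumes "\<sigma> \<in> shuffles a b"
  shows "sign \<sigma> = ps a (\<sigma> ` {..<a})"
proof -
  note f = shuffle_facts[OF assms]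
  have sm1: "strict_mono_on {..<a} \<sigma>" using f(2) by (simp add: atLeast0LessThan)
  have inj1: "inj_on \<sigma> {..<a}" using sm1 strict_mono_on_imp_inj_on by blast
  have ge: "\<forall>l<a. l \<le> \<sigma> l" using smono_ge f(2) by simp
  define D where "D = (\<Sum>l<a. \<sigma> l) - (\<Sum>l<a. l)"
  have "(\<Sum>l<a. l) \<le> (\<Sum>l<a. \<sigma> l)" using ge by (intro sum_mono) auto
  hence sD: "(\<Sum>l<a. \<sigma> l) = D + (\<Sum>l<a. l)" unfolding D_def by simp
  have "sign \<sigma> = (-1)^D" using shuffle_sign_aux assms sD by blast
  moreover have "\<Sum>(\<sigma> ` {..<a}) = (\<Sum>l<a. \<sigma> l)" using sum.reindex[OF inj1] by simp
  ultimately show ?thesis unfolding ps_def using sD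
    by (simp add: power_add flip: mult_2)
qed

lemma shuffle_bij: "bij_betw (\<lambda>\<sigma>. \<sigma> ` {..<a}) (shuffles a b) (SS (a+b) a)"
  unfolding bij_betw_def using shuffle_inj shuffle_facts(5) shuffle_surj by blast

lemma shuffle_sum:
  assumes "length es = a + b"
  shows "(\<Sum>\<sigma>\<in>shuffles a b. F (sign \<sigma>) (map (\<lambda>l. es ! \<sigma> l) [0..<a]) (map (\<lambda>l. es ! \<sigma> l) [a..<a+b]))
       = (\<Sum>S\<in>SS (a+b) a. F (ps a S) (nths es S) (nths es (- S)))"
proof -
  have R: "(\<Sum>\<sigma>\<in>shuffles a b. (\<lambda>S. F (ps a S) (nths es S) (nths es (- S))) (\<sigma> ` {..<a}))
     = (\<Sum>S\<in>SS (a+b) a. F (ps a S) (nths es S) (nths es (- S)))"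
    by (rule sum.reindex_bij_betw[OF shuffle_bij])
  have C: "\<And>\<sigma>. \<sigma> \<in> shuffles a b \<Longrightarrow> F (sign \<sigma>) (map (\<lambda>l. es ! \<sigma> l) [0..<a]) (map (\<lambda>l. es ! \<sigma> l) [a..<a+b])
     = F (ps a (\<sigma> ` {..<a})) (nths es (\<sigma> ` {..<a})) (nths es (- (\<sigma> ` {..<a})))"
  proof -
  fix \<sigma> assume s: "\<sigma> \<in> shuffles a b"
  note f = shuffle_facts[OF s]
  have lt0: "\<forall>l. l < a + b \<longrightarrow> \<sigma> l < a + b"
    using permutes_in_image[OF f(1)] by auto
  have lt: "\<forall>l\<in>{..<a}. \<sigma> l < a + b" "\<forall>l\<in>{a..<a+b}. \<sigma> l < a + b" using lt0 by auto
  have e1: "map (\<lambda>l. es ! \<sigma> l) [0..<a] = nths es (\<sigma> ` {..<a})"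
    using map_smono_nths[OF f(2), of es] lt assms by (simp add: atLeast0LessThan)
  have e2: "map (\<lambda>l. es ! \<sigma> l) [a..<a+b] = nths es ({..<a+b} - \<sigma> ` {..<a})"
    using map_smono_nths[OF f(3), of es] lt assms f(4) by simp
  have e3: "nths es ({..<a+b} - \<sigma> ` {..<a}) = nths es (- (\<sigma> ` {..<a}))"
    by (rule nths_cong_restr) (use assms in auto)
  show "F (sign \<sigma>) (map (\<lambda>l. es ! \<sigma> l) [0..<a]) (map (\<lambda>l. es ! \<sigma> l) [a..<a+b])
     = F (ps a (\<sigma> ` {..<a})) (nths es (\<sigma> ` {..<a})) (nths es (- (\<sigma> ` {..<a})))"
    using e1 e2 e3 shuffle_sign[OF s] by simp
  qed
  show ?thesis using R C by (simp cong: sum.cong)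
qed

definition Sh :: "nat \<Rightarrow> ('x list \<Rightarrow> 'x list \<Rightarrow> 'r::comm_ring_1) \<Rightarrow> 'x list \<Rightarrow> 'r" where
  "Sh a F xs = (\<Sum>S\<in>SS (length xs) a. of_int (ps a S) * F (nths xs S) (nths xs (- S)))"

definition rmv :: "nat \<Rightarrow> nat set \<Rightarrow> nat set" where
  "rmv j S = {x. (x < j \<and> x \<in> S) \<or> (j \<le> x \<and> x + 2 \<in> S)}"

definition insv :: "nat \<Rightarrow> nat set \<Rightarrow> nat set" where
  "insv j S = {x. (x < j \<and> x \<in> S) \<or> (j + 2 \<le> x \<and> x - 2 \<in> S)}"

definition trs :: "nat \<Rightarrow> nat set \<Rightarrow> nat set" where
  "trs j S = {x. transpose j (Suc j) x \<in> S}"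

lemma nths_two: "nths [u,v] T = (if 0 \<in> T then [u] else []) @ (if 1 \<in> T then [v] else [])"
  by (simp add: nths_Cons)

lemma nths_split3:
  "nths (L @ [u,v] @ R) S = nths L S @ nths [u,v] {x. x + length L \<in> S} @ nths R {x. x + 2 + length L \<in> S}"
  by (subst nths_append, subst nths_append) (simp add: add.assoc)

lemma nths_split2:
  "nths (L @ R) S = nths L S @ nths R {x. x + length L \<in> S}"
  by (simp add: nths_append)

lemma nths_L_eq: "(\<And>x. x < length L \<Longrightarrow> x \<in> S \<longleftrightarrow> x \<in> T) \<Longrightarrow> nths L S = nths L T"
  by (rule nths_cong_restr) auto

lemma rmv_compl: "rmv j (- S) = - rmv j S"
  unfolding rmv_def by auto

lemma trs_compl: "trs j (- S) = - trs j S"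
  unfolding trs_def by auto

lemma nths_pairA:
  assumes "length L = j" "j \<in> U" "Suc j \<in> U"
  shows "nths (L @ [u,v] @ R) U = nths L U @ [u,v] @ nths R {x. x + 2 + j \<in> U}"
    "nths (L @ [v,u] @ R) U = nths L U @ [v,u] @ nths R {x. x + 2 + j \<in> U}"
    "nths (L @ R) (rmv j U) = nths L U @ nths R {x. x + 2 + j \<in> U}"
proof -
  show "nths (L @ [u,v] @ R) U = nths L U @ [u,v] @ nths R {x. x + 2 + j \<in> U}"
    "nths (L @ [v,u] @ R) U = nths L U @ [v,u] @ nths R {x. x + 2 + j \<in> U}"
    unfolding nths_split3 nths_two using assms by auto
  have "nths L (rmv j U) = nths L U" by (rule nths_L_eq) (use assms in \<open>auto simp: rmv_def\<close>)
  moreover have "{x. x + length L \<in> rmv j U} = {x. x + 2 + j \<in> U}"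
    using assms by (auto simp: rmv_def algebra_simps)
  ultimately show "nths (L @ R) (rmv j U) = nths L U @ nths R {x. x + 2 + j \<in> U}"
    unfolding nths_split2 by simp
qed

lemma nths_pairB:
  assumes "length L = j" "j \<notin> U" "Suc j \<notin> U"
  shows "nths (L @ [u,v] @ R) U = nths (L @ R) (rmv j U)"
    "nths (L @ [v,u] @ R) U = nths (L @ R) (rmv j U)"
proof -
  have "nths L (rmv j U) = nths L U" by (rule nths_L_eq) (use assms in \<open>auto simp: rmv_def\<close>)
  moreover have "{x. x + length L \<in> rmv j U} = {x. x + 2 + j \<in> U}"
    using assms by (auto simp: rmv_def algebra_simps)
  ultimately show "nths (L @ [u,v] @ R) U = nths (L @ R) (rmv j U)"
    "nths (L @ [v,u] @ R) U = nths (L @ R) (rmv j U)"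
    unfolding nths_split3 nths_two nths_split2 using assms by auto
qed

lemma nths_pairC:
  assumes "length L = j" "(j \<in> U) \<noteq> (Suc j \<in> U)"
  shows "nths (L @ [v,u] @ R) U = nths (L @ [u,v] @ R) (trs j U)"
proof -
  have "nths L (trs j U) = nths L U" by (rule nths_L_eq) (use assms in \<open>auto simp: trs_def\<close>)
  moreover have "{x. x + 2 + length L \<in> trs j U} = {x. x + 2 + j \<in> U}"
    using assms by (auto simp: trs_def transpose_def)
  moreover have "nths [v,u] {x. x + length L \<in> U} = nths [u,v] {x. x + length L \<in> trs j U}"
    unfolding nths_two using assms by (auto simp: trs_def transpose_def)
  ultimately show ?thesis unfolding nths_split3 using assms(1) by simp
qed


lemma insv_image: "insv j S = (\<lambda>x. if x < j then x else x + 2) ` S"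
proof (rule set_eqI, rule iffI)
  fix x assume "x \<in> insv j S"
  then consider "x < j" "x \<in> S" | "j + 2 \<le> x" "x - 2 \<in> S" unfolding insv_def by auto
  thus "x \<in> (\<lambda>x. if x < j then x else x + 2) ` S"
  proof cases
    case 1 thus ?thesis by (intro image_eqI[where x=x]) auto
  next
    case 2 thus ?thesis by (intro image_eqI[where x="x-2"]) auto
  qed
next
  fix x assume "x \<in> (\<lambda>x. if x < j then x else x + 2) ` S"
  thus "x \<in> insv j S" unfolding insv_def by auto
qed

lemma insv_inj: "inj_on (\<lambda>x. if x < j then x else x + (2::nat)) S"
  by (rule inj_onI) (auto split: if_splits)

lemma card_insv: "finite S \<Longrightarrow> card (insv j S) = card S"
  unfolding insv_image by (rule card_image[OF insv_inj])

lemma finite_insv: "finite S \<Longrightarrow> finite (insv j S)"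
  unfolding insv_image by simp

lemma sum_insv: "finite S \<Longrightarrow> \<Sum>(insv j S) = \<Sum>S + 2 * card {x\<in>S. j \<le> x}"
proof -
  assume fS: "finite S"
  have "\<Sum>(insv j S) = (\<Sum>x\<in>S. if x < j then x else x + 2)"
    unfolding insv_image by (rule sum.reindex[OF insv_inj, unfolded comp_def])
  also have "\<dots> = (\<Sum>x\<in>S. x + (if j \<le> x then 2 else 0))" by (intro sum.cong) auto
  also have "\<dots> = \<Sum>S + (\<Sum>x\<in>S. if j \<le> x then 2 else 0)" by (simp add: sum.distrib)
  also have "(\<Sum>x\<in>S. if j \<le> x then 2 else 0) = (\<Sum>x\<in>{x\<in>S. j \<le> x}. (2::nat))"
    using sum.inter_filter[OF fS, of "\<lambda>_. 2::nat" "\<lambda>x. j \<le> x"] by simp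
  finally show ?thesis by simp
qed

lemma ps_insv: "finite S \<Longrightarrow> ps a (insv j S) = ps a S"
  unfolding ps_def by (simp add: sum_insv power_add power_mult)

lemma ps_insA:
  assumes "finite S"
  shows "ps (a+2) (insert j (insert (Suc j) (insv j S))) = ps a S"
proof -
  have nj: "j \<notin> insv j S" "Suc j \<notin> insv j S" unfolding insv_def by auto
  have "\<Sum>(insert j (insert (Suc j) (insv j S))) = j + Suc j + \<Sum>(insv j S)"
    using nj finite_insv[OF assms] by simp
  moreover have "\<Sum>{..<a+2} = \<Sum>{..<a} + a + Suc a" by (simp add: numeral_2_eq_2)
  ultimately have "\<Sum>(insert j (insert (Suc j) (insv j S))) + \<Sum>{..<a+2}
     = (\<Sum>S + \<Sum>{..<a}) + 2 * (j + card {x\<in>S. j \<le> x} + a + 1)"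
    using sum_insv[OF assms, of j] by simp
  thus ?thesis unfolding ps_def by (simp add: power_add power_mult)
qed

lemma rmv_insv: "rmv j (insv j S) = S"
  unfolding rmv_def insv_def by auto

lemma rmv_insA: "rmv j (insert j (insert (Suc j) (insv j S))) = S"
  unfolding rmv_def insv_def by auto

lemma insv_rmv: "insv j (rmv j S) = S - {j, Suc j}"
proof (rule set_eqI)
  fix x show "x \<in> insv j (rmv j S) \<longleftrightarrow> x \<in> S - {j, Suc j}"
  proof (cases "x < j \<or> x = j \<or> x = Suc j")
    case True thus ?thesis by (auto simp: rmv_def insv_def)
  next
    case False
    hence e: "Suc (Suc (x-2)) = x" "j \<le> x - 2" "j + 2 \<le> x" by auto
    show ?thesis unfolding rmv_def insv_def using False e by auto
  qed
qed


lemma trs_trs: "trs j (trs j S) = S"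
  unfolding trs_def by auto

lemma trs_image: "trs j S = transpose j (Suc j) ` S"
proof (rule set_eqI)
  fix x show "x \<in> trs j S \<longleftrightarrow> x \<in> transpose j (Suc j) ` S"
    unfolding trs_def by (metis image_eqI mem_Collect_eq transpose_involutory imageE)
qed

lemma card_trs: "finite S \<Longrightarrow> card (trs j S) = card S"
  unfolding trs_image by (rule card_image) (auto intro: inj_onI simp: transpose_eq_iff)

lemma finite_trs: "finite S \<Longrightarrow> finite (trs j S)"
  unfolding trs_image by simp

lemma trs_sub: "S \<subseteq> {..<N} \<Longrightarrow> Suc j < N \<Longrightarrow> trs j S \<subseteq> {..<N}"
  unfolding trs_def by (auto simp: transpose_def split: if_splits)

lemma ps_trs:
  assumes "finite S" "(j \<in> S) \<noteq> (Suc j \<in> S)"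
  shows "ps a (trs j S) = - ps a S"
proof -
  have "\<Sum>(trs j S) = \<Sum>S + 1 \<or> \<Sum>(trs j S) + 1 = \<Sum>S"
  proof (cases "j \<in> S")
    case True
    hence ns: "Suc j \<notin> S" using assms by auto
    have e: "trs j S = insert (Suc j) (S - {j})"
      unfolding trs_def using True ns by (auto simp: transpose_def)
    have "\<Sum>S = j + \<Sum>(S - {j})" using True assms(1) by (simp add: sum.remove)
    moreover have "\<Sum>(trs j S) = Suc j + \<Sum>(S - {j})" unfolding e using ns assms(1) by simp
    ultimately show ?thesis by simp
  next
    case False
    hence ns: "Suc j \<in> S" using assms by auto
    have e: "trs j S = insert j (S - {Suc j})"
      unfolding trs_def using False ns by (auto simp: transpose_def)
    have "\<Sum>S = Suc j + \<Sum>(S - {Suc j})" using ns assms(1) by (simp add: sum.remove)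
    moreover have "\<Sum>(trs j S) = j + \<Sum>(S - {Suc j})" unfolding e using False assms(1) by simp
    ultimately show ?thesis by simp
  qed
  thus ?thesis unfolding ps_def
  proof (elim disjE)
    assume h: "\<Sum>(trs j S) + 1 = \<Sum>S"
    show "(- 1) ^ (\<Sum>(trs j S) + \<Sum>{..<a}) = - ((- 1) ^ (\<Sum>S + \<Sum>{..<a}) :: int)"
      unfolding h[symmetric] by (simp add: power_add)
  qed (simp add: power_add)
qed

lemma rmv_sub: "S \<subseteq> {..<N} \<Longrightarrow> Suc j < N \<Longrightarrow> rmv j S \<subseteq> {..<N-2}"
  unfolding rmv_def by auto

lemma insv_sub: "S \<subseteq> {..<N-2} \<Longrightarrow> Suc j < N \<Longrightarrow> insv j S \<subseteq> {..<N}"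
  unfolding insv_def by auto

lemma len_nths: "S \<subseteq> {..<length xs} \<Longrightarrow> length (nths xs S) = card S"
  unfolding length_nths by (rule arg_cong[where f=card]) auto

lemma len_nths_compl: "S \<subseteq> {..<length xs} \<Longrightarrow> length (nths xs (-S)) = length xs - card S"
proof -
  assume a: "S \<subseteq> {..<length xs}"
  have "{i. i < length xs \<and> i \<in> - S} = {..<length xs} - S" by auto
  thus ?thesis unfolding length_nths using card_Diff_subset[OF finite_subset[OF a] a] by simp
qed

lemma Sh_skew:
  fixes F :: "'x list \<Rightarrow> 'x list \<Rightarrow> 'r::comm_ring_1" and L R :: "'x list"
  assumes lens: "length L + 2 + length R = a + b"
    and HA: "\<And>X Y l. length X = a \<Longrightarrow> length Y = b \<Longrightarrow> Suc l < a \<Longrightarrow>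
       F X Y + F (X[l := X!Suc l, Suc l := X!l]) Y = G1 (X!l) (X!Suc l) (take l X @ drop (Suc (Suc l)) X) Y"
    and HB: "\<And>X Y l. length X = a \<Longrightarrow> length Y = b \<Longrightarrow> Suc l < b \<Longrightarrow>
       F X Y + F X (Y[l := Y!Suc l, Suc l := Y!l]) = G2 (Y!l) (Y!Suc l) X (take l Y @ drop (Suc (Suc l)) Y)"
  shows "Sh a F (L@[u,v]@R) + Sh a F (L@[v,u]@R) =
     (if 2 \<le> a then Sh (a-2) (G1 u v) (L@R) else 0) + (if 2 \<le> b then Sh a (G2 u v) (L@R) else 0)"
proof -
  define j where "j = length L"
  define N where "N = a + b"
  define es where "es = L@[u,v]@R"
  define es' where "es' = L@[v,u]@R"
  have les: "length es = N" "length es' = N" "length (L@R) = N - 2" "Suc j < N"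
    using lens unfolding es_def es'_def N_def j_def by auto
  define t where "t S = of_int (ps a S) * F (nths es S) (nths es (-S))" for S
  define t' where "t' S = of_int (ps a S) * F (nths es' S) (nths es' (-S))" for S
  have Sh1: "Sh a F es = sum t (SS N a)" unfolding Sh_def t_def les ..
  have Sh2: "Sh a F es' = sum t' (SS N a)" unfolding Sh_def t'_def les ..
  define A where "A = {S\<in>SS N a. j \<in> S \<and> Suc j \<in> S}"
  define B where "B = {S\<in>SS N a. j \<notin> S \<and> Suc j \<notin> S}"
  define C where "C = {S\<in>SS N a. (j \<in> S) \<noteq> (Suc j \<in> S)}"
  have fin: "finite A" "finite B" "finite C" unfolding A_def B_def C_def by auto
  have split: "sum f (SS N a) = sum f A + sum f B + sum f C" for f :: "nat set \<Rightarrow> 'r"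
  proof -
    have "SS N a = A \<union> (B \<union> C)" unfolding A_def B_def C_def by auto
    moreover have "A \<inter> (B \<union> C) = {}" "B \<inter> C = {}" unfolding A_def B_def C_def by auto
    ultimately show ?thesis using fin by (simp add: sum.union_disjoint)
  qed
  have SSprop: "S \<subseteq> {..<N}" "card S = a" "finite S" if "S \<in> SS N a" for S
    using that unfolding SS_def by (auto intro: finite_subset)
  have Cpart: "sum t' C = - sum t C"
  proof -
    have "sum t' C = (\<Sum>S\<in>C. - t (trs j S))"
    proof (rule sum.cong[OF refl])
      fix S assume "S \<in> C"
      hence S: "S \<in> SS N a" "(j \<in> S) \<noteq> (Suc j \<in> S)" unfolding C_def by auto
      have e1: "nths es' S = nths es (trs j S)"
        unfolding es_def es'_def by (rule nths_pairC) (use S j_def in auto)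
      have e2: "nths es' (-S) = nths es (- trs j S)"
        unfolding es_def es'_def trs_compl[symmetric] by (rule nths_pairC) (use S j_def in auto)
      have "ps a (trs j S) = - ps a S" using ps_trs SSprop(3)[OF S(1)] S(2) by blast
      thus "t' S = - t (trs j S)" unfolding t_def t'_def e1 e2 by simp
    qed
    also have "\<dots> = - (\<Sum>S\<in>C. t (trs j S))" by (simp add: sum_negf)
    finally have c1: "sum t' C = - (\<Sum>S\<in>C. t (trs j S))" .
    have Ccl: "trs j S \<in> C" if "S \<in> C" for S
    proof -
      have S: "S \<in> SS N a" "(j \<in> S) \<noteq> (Suc j \<in> S)" using that unfolding C_def by auto
      show "trs j S \<in> C" unfolding C_def SS_def
        using S SSprop[OF S(1)] trs_sub card_trs les(4)
        by (auto simp: trs_def transpose_def)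
    qed
    have "(\<Sum>S\<in>C. t (trs j S)) = sum t C"
      by (rule sum.reindex_bij_witness[where i="trs j" and j="trs j"]) (auto simp: trs_trs Ccl)
    with c1 show ?thesis by simp
  qed
  have Apart: "(\<Sum>S\<in>A. t S + t' S) = (if 2 \<le> a then Sh (a-2) (G1 u v) (L@R) else 0)"
  proof (cases "2 \<le> a")
    case False
    have "A = {}"
    proof (rule ccontr)
      assume "A \<noteq> {}"
      then obtain S where S: "S \<in> SS N a" "j \<in> S" "Suc j \<in> S" unfolding A_def by auto
      hence "card {j, Suc j} \<le> card S" using SSprop[OF S(1)] by (intro card_mono) auto
      thus False using False SSprop[OF S(1)] by simp
    qed
    thus ?thesis using False by simp
  next
    case True
    then obtain a' where a': "a = a' + 2" by (metis add.commute le_Suc_ex)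
    define h where "h S' = of_int (ps a' S') * G1 u v (nths (L@R) S') (nths (L@R) (-S'))" for S'
    have "(\<Sum>S\<in>A. t S + t' S) = sum h (SS (N-2) a')"
    proof (rule sum.reindex_bij_witness[where i="\<lambda>S'. insert j (insert (Suc j) (insv j S'))" and j="rmv j"])
      fix S assume "S \<in> A"
      hence S: "S \<in> SS N a" "j \<in> S" "Suc j \<in> S" unfolding A_def by auto
      note Sp = SSprop[OF S(1)]
      show e: "insert j (insert (Suc j) (insv j (rmv j S))) = S" using S insv_rmv by auto
      have rs: "rmv j S \<subseteq> {..<N-2}" using rmv_sub Sp les by blast
      hence fr: "finite (rmv j S)" by (rule finite_subset) auto
      have nj: "j \<notin> insv j (rmv j S)" "Suc j \<notin> insv j (rmv j S)" unfolding insv_def by auto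
      have "card S = card (rmv j S) + 2"
        using arg_cong[OF e, of card] nj card_insv[OF fr] finite_insv[OF fr] by simp
      thus "rmv j S \<in> SS (N-2) a'" unfolding SS_def using rs Sp a' by simp
      define P where "P = nths L S"
      define Q where "Q = nths R {x. x + 2 + j \<in> S}"
      have X: "nths es S = P @ [u,v] @ Q" "nths es' S = P @ [v,u] @ Q" "nths (L@R) (rmv j S) = P @ Q"
        unfolding es_def es'_def P_def Q_def using nths_pairA[OF j_def[symmetric] S(2,3)] by auto
      have Y: "nths es (-S) = nths (L@R) (- rmv j S)" "nths es' (-S) = nths (L@R) (- rmv j S)"
        unfolding es_def es'_def rmv_compl[symmetric] using nths_pairB[OF j_def[symmetric], of "-S"] S by auto
      have lX: "length (P @ [u,v] @ Q) = a" using len_nths[of S es] Sp les X by simp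
      have lY: "length (nths es (-S)) = b" using len_nths_compl[of S es] Sp les N_def by simp
      have HA': "F (P@[u,v]@Q) (nths es (-S)) + F (P@[v,u]@Q) (nths es (-S)) = G1 u v (P@Q) (nths es (-S))"
        using HA[OF lX lY, of "length P"] lX by (simp add: nth_append list_update_append)
      have "ps a S = ps a' (rmv j S)" using ps_insA[OF fr, of a' j] e a' by simp
      thus "h (rmv j S) = t S + t' S"
        unfolding h_def t_def t'_def X Y using HA' X Y by (simp add: distrib_left[symmetric])
    next
      fix S' assume S': "S' \<in> SS (N-2) a'"
      have fS': "finite S'" using S' unfolding SS_def by (auto intro: finite_subset)
      show "rmv j (insert j (insert (Suc j) (insv j S'))) = S'" by (rule rmv_insA)
      have nj: "j \<notin> insv j S'" "Suc j \<notin> insv j S'" unfolding insv_def by auto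
      show "insert j (insert (Suc j) (insv j S')) \<in> A"
        unfolding A_def SS_def using S' insv_sub[of S' N j] les nj card_insv[OF fS'] finite_insv[OF fS'] a'
        unfolding SS_def by auto
    qed
    also have "\<dots> = Sh (a-2) (G1 u v) (L@R)" unfolding Sh_def h_def les a' by simp
    finally show ?thesis using True by simp
  qed
  have Bpart: "(\<Sum>S\<in>B. t S + t' S) = (if 2 \<le> b then Sh a (G2 u v) (L@R) else 0)"
  proof (cases "2 \<le> b")
    case False
    have "B = {}"
    proof (rule ccontr)
      assume "B \<noteq> {}"
      then obtain S where S: "S \<in> SS N a" "j \<notin> S" "Suc j \<notin> S" unfolding B_def by auto
      note Sp = SSprop[OF S(1)]
      have "card {j, Suc j} \<le> card ({..<N} - S)" using S les by (intro card_mono) auto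
      moreover have "card ({..<N} - S) = b" using card_Diff_subset[OF Sp(3) Sp(1)] Sp N_def by simp
      ultimately show False using False by simp
    qed
    thus ?thesis using False by simp
  next
    case True
    define h where "h S' = of_int (ps a S') * G2 u v (nths (L@R) S') (nths (L@R) (-S'))" for S'
    have "(\<Sum>S\<in>B. t S + t' S) = sum h (SS (N-2) a)"
    proof (rule sum.reindex_bij_witness[where i="insv j" and j="rmv j"])
      fix S assume "S \<in> B"
      hence S: "S \<in> SS N a" "j \<notin> S" "Suc j \<notin> S" unfolding B_def by auto
      note Sp = SSprop[OF S(1)]
      show e: "insv j (rmv j S) = S" using S insv_rmv by auto
      have rs: "rmv j S \<subseteq> {..<N-2}" using rmv_sub Sp les by blast
      hence fr: "finite (rmv j S)" by (rule finite_subset) auto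
      have "card S = card (rmv j S)" using arg_cong[OF e, of card] card_insv[OF fr] by simp
      thus "rmv j S \<in> SS (N-2) a" unfolding SS_def using rs Sp by simp
      define P where "P = nths L (-S)"
      define Q where "Q = nths R {x. x + 2 + j \<in> -S}"
      have nS: "j \<in> -S" "Suc j \<in> -S" using S by auto
      have Y: "nths es (-S) = P @ [u,v] @ Q" "nths es' (-S) = P @ [v,u] @ Q" "nths (L@R) (- rmv j S) = P @ Q"
        unfolding es_def es'_def P_def Q_def rmv_compl[symmetric]
        using nths_pairA[OF j_def[symmetric] nS] by auto
      have X: "nths es S = nths (L@R) (rmv j S)" "nths es' S = nths (L@R) (rmv j S)"
        unfolding es_def es'_def using nths_pairB[OF j_def[symmetric]] S by auto
      have lY: "length (P @ [u,v] @ Q) = b" using len_nths_compl[of S es] Sp les Y N_def by simp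
      have lX: "length (nths es S) = a" using len_nths[of S es] Sp les by simp
      have HB': "F (nths es S) (P@[u,v]@Q) + F (nths es S) (P@[v,u]@Q) = G2 u v (nths es S) (P@Q)"
        using HB[OF lX lY, of "length P"] lY by (simp add: nth_append list_update_append)
      have "ps a S = ps a (rmv j S)" using ps_insv[OF fr, of a j] e by simp
      thus "h (rmv j S) = t S + t' S"
        unfolding h_def t_def t'_def X Y using HB' X Y by (simp add: distrib_left[symmetric])
    next
      fix S' assume S': "S' \<in> SS (N-2) a"
      have fS': "finite S'" using S' unfolding SS_def by (auto intro: finite_subset)
      show "rmv j (insv j S') = S'" by (rule rmv_insv)
      have nj: "j \<notin> insv j S'" "Suc j \<notin> insv j S'" unfolding insv_def by auto
      show "insv j S' \<in> B"
        unfolding B_def SS_def using S' insv_sub[of S' N j] les nj card_insv[OF fS']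
        unfolding SS_def by auto
    qed
    also have "\<dots> = Sh a (G2 u v) (L@R)" unfolding Sh_def h_def les by simp
    finally show ?thesis using True by simp
  qed
  have "Sh a F es + Sh a F es' = (\<Sum>S\<in>A. t S + t' S) + (\<Sum>S\<in>B. t S + t' S) + (sum t C + sum t' C)"
    unfolding Sh1 Sh2 split[of t] split[of t'] by (simp add: sum.distrib algebra_simps)
  also have "\<dots> = (if 2 \<le> a then Sh (a-2) (G1 u v) (L@R) else 0) + (if 2 \<le> b then Sh a (G2 u v) (L@R) else 0)"
    using Apart Bpart Cpart by simp
  finally show ?thesis unfolding es_def es'_def .
qed

definition good :: "(('x \<Rightarrow> 'r::comm_ring_1) \<Rightarrow> bool) \<Rightarrow> bool" where
  "good P \<longleftrightarrow> (\<forall>F c. P F \<longrightarrow> P (\<lambda>x. c * F x)) \<and> (\<forall>F c. P F \<longrightarrow> P (\<lambda>x. F x * c)) \<and>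
     (\<forall>F G. P F \<longrightarrow> P G \<longrightarrow> P (\<lambda>x. F x + G x)) \<and> P (\<lambda>x. 0)"

lemma good_sum:
  assumes "good P" "finite A" "\<And>a. a \<in> A \<Longrightarrow> P (f a)"
  shows "P (\<lambda>x. \<Sum>a\<in>A. f a x)"
  using assms(2,3)
proof (induction A rule: finite_induct)
  case empty thus ?case using assms(1) unfolding good_def by simp
next
  case (insert a A)
  hence "P (\<lambda>x. f a x + (\<Sum>a\<in>A. f a x))" using assms(1) unfolding good_def by blast
  thus ?case using insert by simp
qed

lemma good_mult: "good P \<Longrightarrow> P F \<Longrightarrow> P (\<lambda>x. c * F x * d)"
  unfolding good_def by blast

lemma good_cong: "P F \<Longrightarrow> (\<And>x. F x = G x) \<Longrightarrow> P G"
proof -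
  assume "P F" "\<And>x. F x = G x"
  hence "F = G" by auto
  thus "P G" using \<open>P F\<close> by simp
qed

lemma has_order_cmult: "has_order sc s F \<Longrightarrow> has_order sc s (\<lambda>x. c * F x)"
proof (induction s arbitrary: F)
  case 0 thus ?case by (simp add: algebra_simps)
next
  case (Suc s)
  show ?case unfolding has_order.simps
  proof
    fix f
    have "has_order sc s (\<lambda>x. c * (F (sc f x) - f * F x))" using Suc by simp
    thus "has_order sc s (\<lambda>x. c * F (sc f x) - f * (c * F x))"
      by (rule good_cong) (simp add: algebra_simps)
  qed
qed

lemma has_order_add: "has_order sc s F \<Longrightarrow> has_order sc s G \<Longrightarrow> has_order sc s (\<lambda>x. F x + G x)"
proof (induction s arbitrary: F G)
  case 0 thus ?case by (simp add: algebra_simps)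
next
  case (Suc s)
  show ?case unfolding has_order.simps
  proof
    fix f
    have "has_order sc s (\<lambda>x. (F (sc f x) - f * F x) + (G (sc f x) - f * G x))" using Suc by simp
    thus "has_order sc s (\<lambda>x. F (sc f x) + G (sc f x) - f * (F x + G x))"
      by (rule good_cong) (simp add: algebra_simps)
  qed
qed

lemma has_order_zero: "has_order sc s (\<lambda>x. 0)"
  by (induction s) auto

lemma good_order: "good (has_order sc s)"
  unfolding good_def using has_order_cmult has_order_add has_order_zero
  by (auto simp: mult.commute[of _ c for c])

lemma has_order_mono: "has_order sc s F \<Longrightarrow> s \<le> s' \<Longrightarrow> has_order sc s' F"
proof (induction s' arbitrary: s F)
  case 0 thus ?case by simp
next
  case (Suc s')
  show ?case
  proof (cases s)
    case 0
    have "\<forall>f. has_order sc s' (\<lambda>x. F (sc f x) - f * F x)"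
      using Suc.prems 0 by (simp add: has_order_zero)
    thus ?thesis by simp
  next
    case (Suc s0)
    thus ?thesis using Suc.prems Suc.IH[of s0] by auto
  qed
qed

definition linP :: "('r::{comm_ring_1,real_algebra_1} \<Rightarrow> 'x::ab_group_add \<Rightarrow> 'x) \<Rightarrow> ('x \<Rightarrow> 'r) \<Rightarrow> bool" where
  "linP sc F \<longleftrightarrow> (\<forall>x y. F (x + y) = F x + F y) \<and> (\<forall>c x. F (sc (of_real c) x) = of_real c * F x)"

lemma good_lin: "good (linP sc)"
  unfolding good_def linP_def by (auto simp: algebra_simps)

lemma nths_update:
  assumes "j < length xs"
  shows "nths (xs[j:=x]) S = (if j \<in> S then (nths xs S)[card {y\<in>S. y < j} := x] else nths xs S)"
proof -
  define L where "L = take j xs"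
  define R where "R = drop (Suc j) xs"
  have xs: "xs = L @ [xs!j] @ R" unfolding L_def R_def using assms by (simp add: id_take_nth_drop)
  have xs': "xs[j:=x] = L @ [x] @ R" unfolding L_def R_def using assms by (simp add: upd_conv_take_nth_drop)
  have lL: "length L = j" unfolding L_def using assms by simp
  have cL: "length (nths L S) = card {y\<in>S. y < j}"
    unfolding length_nths lL by (rule arg_cong[where f=card]) auto
  have e: "nths (L @ [z] @ R) S = nths L S @ nths [z] {y. y + j \<in> S} @ nths R {y. y + Suc j \<in> S}" for z
    by (subst nths_append, subst nths_append) (simp add: lL add.assoc)
  have A: "nths xs S = nths L S @ nths [xs!j] {y. y + j \<in> S} @ nths R {y. y + Suc j \<in> S}"
    by (subst xs, rule e)
  have B: "nths (xs[j:=x]) S = nths L S @ nths [x] {y. y + j \<in> S} @ nths R {y. y + Suc j \<in> S}"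
    by (subst xs', rule e)
  show ?thesis unfolding A B using cL by (simp add: list_update_append nths_Cons)
qed

lemma card_below_lt:
  fixes S :: "nat set"
  assumes "finite S" "j \<in> S"
  shows "card {y\<in>S. y < j} < card S"
proof -
  have "{y\<in>S. y < j} \<subseteq> S - {j}" by auto
  hence "card {y\<in>S. y < j} \<le> card (S - {j})" using assms(1) by (intro card_mono) auto
  moreover have "card (S - {j}) < card S" using assms by (intro card_Diff1_less)
  ultimately show ?thesis by simp
qed

lemma card_below_last:
  assumes "S \<subseteq> {..<N}" "j \<in> S" "Suc j = N"
  shows "Suc (card {y\<in>S. y < j}) = card S"
proof -
  have fS: "finite S" using assms(1) finite_subset by blast
  have "{y\<in>S. y < j} = S - {j}" using assms by auto
  moreover have "card S > 0" using fS assms(2) card_gt_0_iff by blast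
  ultimately show ?thesis using fS assms(2) by (simp add: card_Suc_Diff1)
qed

lemma sum_slot:
  assumes g: "good P" and j: "j < length xs"
    and H1: "\<And>U Z Z' c. U \<in> SS (length xs) a \<Longrightarrow> j \<in> U \<Longrightarrow> length Z = a \<Longrightarrow> length Z' = length xs - a \<Longrightarrow>
        c < a \<Longrightarrow> (Suc j = length xs \<Longrightarrow> Suc c = a) \<Longrightarrow> P (\<lambda>x. H U (Z[c:=x]) Z')"
    and H2: "\<And>U Z Z' c. U \<in> SS (length xs) a \<Longrightarrow> j \<notin> U \<Longrightarrow> length Z = a \<Longrightarrow> length Z' = length xs - a \<Longrightarrow>
        c < length xs - a \<Longrightarrow> (Suc j = length xs \<Longrightarrow> Suc c = length xs - a) \<Longrightarrow> P (\<lambda>x. H U Z (Z'[c:=x]))"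
  shows "P (\<lambda>x. \<Sum>U\<in>SS (length xs) a. H U (nths (xs[j:=x]) U) (nths (xs[j:=x]) (-U)))"
proof (rule good_sum[OF g finite_SS])
  fix U assume U: "U \<in> SS (length xs) a"
  have Us: "U \<subseteq> {..<length xs}" "card U = a" "finite U" using U unfolding SS_def by (auto intro: finite_subset)
  have lZ: "length (nths xs U) = a" using len_nths Us by blast
  have lZ': "length (nths xs (-U)) = length xs - a" using len_nths_compl Us by blast
  show "P (\<lambda>x. H U (nths (xs[j:=x]) U) (nths (xs[j:=x]) (-U)))"
  proof (cases "j \<in> U")
    case True
    have c1: "card {y\<in>U. y < j} < a" using card_below_lt[OF Us(3) True] Us(2) by simp
    have c2: "Suc j = length xs \<Longrightarrow> Suc (card {y\<in>U. y < j}) = a"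
      using card_below_last[OF Us(1) True] Us(2) by simp
    have "P (\<lambda>x. H U ((nths xs U)[card {y\<in>U. y < j} := x]) (nths xs (-U)))"
      by (rule H1[OF U True lZ lZ' c1 c2])
    thus ?thesis by (rule good_cong[where P=P]) (simp add: nths_update[OF j] True)
  next
    case False
    have fin: "finite ({..<length xs} - U)" by simp
    have cc: "card {y\<in>-U. y < j} = card {y\<in>{..<length xs} - U. y < j}"
      using j by (intro arg_cong[where f=card]) auto
    have jin: "j \<in> {..<length xs} - U" using j False by simp
    have cU: "card ({..<length xs} - U) = length xs - a" using card_Diff_subset[OF Us(3) Us(1)] Us(2) by simp
    have c1: "card {y\<in>-U. y < j} < length xs - a"
      using card_below_lt[OF fin jin] cU cc by simp
    have c2: "Suc j = length xs \<Longrightarrow> Suc (card {y\<in>-U. y < j}) = length xs - a"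
    proof -
      assume sj: "Suc j = length xs"
      have "Suc (card {y\<in>{..<length xs} - U. y < j}) = card ({..<length xs} - U)"
        by (rule card_below_last[OF _ jin sj]) auto
      thus ?thesis using cU cc by simp
    qed
    have "P (\<lambda>x. H U (nths xs U) ((nths xs (-U))[card {y\<in>-U. y < j} := x]))"
      by (rule H2[OF U False lZ lZ' c1 c2])
    thus ?thesis by (rule good_cong[where P=P]) (simp add: nths_update[OF j] False)
  qed
qed

lemma cprod_alt:
  assumes les: "length es = p + q - 2*k" and las: "length as = k"
  shows "cprod p \<omega> q \<eta> k es as = (\<Sum>i | i \<le> k \<and> i \<le> p div 2 \<and> k - i \<le> q div 2.
     Sh (p - 2*i) (\<lambda>X Y. \<Sum>T\<in>SS k i. \<omega> i X (nths as T) * \<eta> (k-i) Y (nths as (-T))) es)"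
  unfolding cprod_def
proof (rule sum.cong[OF refl])
  fix i assume "i \<in> {i. i \<le> k \<and> i \<le> p div 2 \<and> k - i \<le> q div 2}"
  hence i: "i \<le> k" "2*i \<le> p" "2*(k-i) \<le> q" by auto
  define a where "a = p - 2*i"
  define b where "b = q - 2*(k-i)"
  have ab: "p + q - 2*k = a + b" "p - 2*i = a" using i unfolding a_def b_def by auto
  have ik: "i + (k - i) = k" using i by simp
  define W where "W X Y = (\<Sum>T\<in>SS k i. \<omega> i X (nths as T) * \<eta> (k-i) Y (nths as (-T)))" for X Y
  have st: "(\<Sum>\<tau>\<in>shuffles i (k-i). \<omega> i X (map (\<lambda>l. as ! \<tau> l) [0..<i]) * \<eta> (k-i) Y (map (\<lambda>l. as ! \<tau> l) [i..<k]))
      = W X Y" for X Y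
    using shuffle_sum[of as i "k-i" "\<lambda>s Z Z'. \<omega> i X Z * \<eta> (k-i) Y Z'"] las ik unfolding W_def by simp
  have "(\<Sum>\<sigma>\<in>shuffles (p - 2*i) (q - 2*(k-i)). \<Sum>\<tau>\<in>shuffles i (k-i).
        of_int (sign \<sigma>) * \<omega> i (map (\<lambda>l. es ! \<sigma> l) [0..<p - 2*i]) (map (\<lambda>l. as ! \<tau> l) [0..<i]) *
        \<eta> (k-i) (map (\<lambda>l. es ! \<sigma> l) [p - 2*i..<p + q - 2*k]) (map (\<lambda>l. as ! \<tau> l) [i..<k]))
     = (\<Sum>\<sigma>\<in>shuffles a b. of_int (sign \<sigma>) * W (map (\<lambda>l. es ! \<sigma> l) [0..<a]) (map (\<lambda>l. es ! \<sigma> l) [a..<a+b]))"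
    unfolding ab a_def[symmetric] b_def[symmetric] st[symmetric]
    by (simp add: sum_distrib_left mult.assoc)
  also have "\<dots> = Sh a W es"
    unfolding Sh_def using shuffle_sum[of es a b "\<lambda>s X Y. of_int s * W X Y"] les ab by simp
  finally show "(\<Sum>\<sigma>\<in>shuffles (p - 2*i) (q - 2*(k-i)). \<Sum>\<tau>\<in>shuffles i (k-i).
        of_int (sign \<sigma>) * \<omega> i (map (\<lambda>l. es ! \<sigma> l) [0..<p - 2*i]) (map (\<lambda>l. as ! \<tau> l) [0..<i]) *
        \<eta> (k-i) (map (\<lambda>l. es ! \<sigma> l) [p - 2*i..<p + q - 2*k]) (map (\<lambda>l. as ! \<tau> l) [i..<k]))
     = Sh (p - 2*i) (\<lambda>X Y. \<Sum>T\<in>SS k i. \<omega> i X (nths as T) * \<eta> (k-i) Y (nths as (-T))) es"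
    unfolding W_def a_def .
qed

definition dn :: "nat set \<Rightarrow> nat set" where "dn T = {x. Suc x \<in> T}"

lemma SS_Suc_split:
  assumes las: "length as = k"
  shows "(\<Sum>T\<in>SS (Suc k) c. H (nths (\<alpha>#as) T) (nths (\<alpha>#as) (-T))) =
    (if 1 \<le> c then (\<Sum>T\<in>SS k (c-1). H (\<alpha> # nths as T) (nths as (-T))) else 0) +
    (\<Sum>T\<in>SS k c. H (nths as T) (\<alpha> # nths as (-T)))"
proof -
  define A where "A = {T\<in>SS (Suc k) c. 0 \<in> T}"
  define B where "B = {T\<in>SS (Suc k) c. 0 \<notin> T}"
  have spl: "(\<Sum>T\<in>SS (Suc k) c. f T) = sum f A + sum f B" for f :: "nat set \<Rightarrow> 'b::comm_monoid_add"
  proof -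
    have "SS (Suc k) c = A \<union> B" "A \<inter> B = {}" unfolding A_def B_def by auto
    moreover have "finite A" "finite B" unfolding A_def B_def by auto
    ultimately show ?thesis by (simp add: sum.union_disjoint)
  qed
  have dnsub: "T \<subseteq> {..<Suc k} \<Longrightarrow> dn T \<subseteq> {..<k}" for T unfolding dn_def by auto
  have Aeq: "T = insert 0 (Suc ` dn T)" if "0 \<in> T" for T
    using that unfolding dn_def by (auto, metis not0_implies_Suc imageI mem_Collect_eq)
  have Beq: "T = Suc ` dn T" if "0 \<notin> T" for T
    using that unfolding dn_def by (auto, metis not0_implies_Suc imageI mem_Collect_eq)
  have dnA: "dn (insert 0 (Suc ` T)) = T" "dn (Suc ` T) = T" for T unfolding dn_def by auto
  have cardS: "finite T \<Longrightarrow> card (Suc ` T) = card T" for T by (simp add: card_image)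
  have cset: "{j. Suc j \<in> -T} = - dn T" for T unfolding dn_def by auto
  have nA: "nths (\<alpha>#as) T = \<alpha> # nths as (dn T)" "nths (\<alpha>#as) (-T) = nths as (- dn T)" if "0 \<in> T" for T
    using that cset[of T] unfolding nths_Cons by (simp_all add: dn_def)
  have nB: "nths (\<alpha>#as) T = nths as (dn T)" "nths (\<alpha>#as) (-T) = \<alpha> # nths as (- dn T)" if "0 \<notin> T" for T
    using that cset[of T] unfolding nths_Cons by (simp_all add: dn_def)
  have PA: "sum (\<lambda>T. H (nths (\<alpha>#as) T) (nths (\<alpha>#as) (-T))) A =
      (if 1 \<le> c then (\<Sum>T\<in>SS k (c-1). H (\<alpha> # nths as T) (nths as (-T))) else 0)"
  proof (cases "1 \<le> c")
    case False
    have "T \<notin> A" for T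
    proof
      assume "T \<in> A"
      hence T: "T \<subseteq> {..<Suc k}" "card T = c" "0 \<in> T" unfolding A_def SS_def by auto
      have "finite T" using T(1) finite_subset by blast
      hence "card T > 0" using T(3) card_gt_0_iff by blast
      thus False using T(2) False by simp
    qed
    hence "A = {}" by blast
    thus ?thesis using False by simp
  next
    case True
    have "sum (\<lambda>T. H (nths (\<alpha>#as) T) (nths (\<alpha>#as) (-T))) A = (\<Sum>T\<in>SS k (c-1). H (\<alpha> # nths as T) (nths as (-T)))"
    proof (rule sum.reindex_bij_witness[where j=dn and i="\<lambda>T. insert 0 (Suc ` T)"])
      fix T assume "T \<in> A"
      hence T: "T \<subseteq> {..<Suc k}" "card T = c" "0 \<in> T" unfolding A_def SS_def by auto
      show "insert 0 (Suc ` dn T) = T" using Aeq T by simp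
      have fd: "finite (dn T)" using dnsub[OF T(1)] finite_subset by blast
      have "card T = Suc (card (dn T))" using arg_cong[OF Aeq[OF T(3)], of card] fd cardS by (simp add: card_insert_if)
      thus "dn T \<in> SS k (c-1)" unfolding SS_def using dnsub[OF T(1)] T by simp
      show "H (\<alpha> # nths as (dn T)) (nths as (- dn T)) = H (nths (\<alpha>#as) T) (nths (\<alpha>#as) (-T))"
        using nA[OF T(3)] by simp
    next
      fix T assume "T \<in> SS k (c-1)"
      hence T: "T \<subseteq> {..<k}" "card T = c - 1" "finite T" unfolding SS_def by (auto intro: finite_subset)
      show "dn (insert 0 (Suc ` T)) = T" by (rule dnA)
      show "insert 0 (Suc ` T) \<in> A" unfolding A_def SS_def using T True cardS[OF T(3)]
        by (auto simp: card_insert_if)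
    qed
    thus ?thesis using True by simp
  qed
  have PB: "sum (\<lambda>T. H (nths (\<alpha>#as) T) (nths (\<alpha>#as) (-T))) B = (\<Sum>T\<in>SS k c. H (nths as T) (\<alpha> # nths as (-T)))"
  proof (rule sum.reindex_bij_witness[where j=dn and i="\<lambda>T. Suc ` T"])
    fix T assume "T \<in> B"
    hence T: "T \<subseteq> {..<Suc k}" "card T = c" "0 \<notin> T" unfolding B_def SS_def by auto
    show "Suc ` dn T = T" using Beq T by simp
    have fd: "finite (dn T)" using dnsub[OF T(1)] finite_subset by blast
    have "card T = card (dn T)" using arg_cong[OF Beq[OF T(3)], of card] fd cardS by simp
    thus "dn T \<in> SS k c" unfolding SS_def using dnsub[OF T(1)] T by simp
    show "H (nths as (dn T)) (\<alpha> # nths as (- dn T)) = H (nths (\<alpha>#as) T) (nths (\<alpha>#as) (-T))"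
      using nB[OF T(3)] by simp
  next
    fix T assume "T \<in> SS k c"
    hence T: "T \<subseteq> {..<k}" "card T = c" "finite T" unfolding SS_def by (auto intro: finite_subset)
    show "dn (Suc ` T) = T" by (rule dnA)
    show "Suc ` T \<in> B" unfolding B_def SS_def using T cardS[OF T(3)] by auto
  qed
  show ?thesis unfolding spl PA PB ..
qed

lemma nths_perm_mset:
  assumes "\<pi> permutes {..<length as}"
  shows "mset (nths (permute_list \<pi> as) U) = mset (nths as (\<pi> ` U))"
proof -
  define n where "n = length as"
  have e1: "nths (permute_list \<pi> as) U = map (nth as) (map \<pi> (nths [0..<n] U))"
  proof -
    have "permute_list \<pi> as = map (nth as) (map \<pi> [0..<n])" unfolding permute_list_def n_def by simp
    thus ?thesis by (simp only: nths_map)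
  qed
  have e2: "nths as (\<pi> ` U) = map (nth as) (nths [0..<n] (\<pi> ` U))"
    unfolding n_def by (metis map_nth nths_map)
  have inj: "inj \<pi>" using assms permutes_inj by blast
  have "set (map \<pi> (nths [0..<n] U)) = set (nths [0..<n] (\<pi> ` U))"
  proof -
    have sn: "set (nths [0..<n] V) = {i. i < n \<and> i \<in> V}" for V
      unfolding set_nths by (auto intro!: exI[where x=i for i])
    have "set (nths [0..<n] U) = {i. i < n \<and> i \<in> U}" by (rule sn)
    moreover have "set (nths [0..<n] (\<pi> ` U)) = {i. i < n \<and> i \<in> \<pi> ` U}" by (rule sn)
    moreover have "\<pi> ` {i. i < n \<and> i \<in> U} = {i. i < n \<and> i \<in> \<pi> ` U}"
      using permutes_in_image[OF assms] inj unfolding n_def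
      by (auto simp: inj_image_mem_iff)
    ultimately show ?thesis by simp
  qed
  moreover have "distinct (map \<pi> (nths [0..<n] U))" "distinct (nths [0..<n] (\<pi> ` U))"
    using inj by (auto simp: distinct_map inj_on_subset[OF inj])
  ultimately have "mset (map \<pi> (nths [0..<n] U)) = mset (nths [0..<n] (\<pi> ` U))"
    using set_eq_iff_mset_eq_distinct by blast
  hence "mset (map (nth as) (map \<pi> (nths [0..<n] U))) = mset (map (nth as) (nths [0..<n] (\<pi> ` U)))"
    by (simp only: mset_map)
  thus ?thesis unfolding e1 e2 .
qed


lemma W_mset:
  assumes m: "mset as' = mset as" and las: "length as = k"
    and sA: "\<And>Z Z'. length Z = i \<Longrightarrow> mset Z' = mset Z \<Longrightarrow> A Z' = A Z"
    and sB: "\<And>Z Z'. length Z = k - i \<Longrightarrow> mset Z' = mset Z \<Longrightarrow> B Z' = B Z"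
  shows "(\<Sum>T\<in>SS k i. A (nths as' T) * B (nths as' (-T))) = (\<Sum>T\<in>SS k i. A (nths as T) * B (nths as (-T)))"
proof -
  obtain \<pi> where \<pi>: "\<pi> permutes {..<length as}" "permute_list \<pi> as = as'"
    using mset_eq_permutation[OF m] by metis
  have bij: "bij \<pi>" using \<pi>(1) permutes_bij by blast
  have inj: "inj \<pi>" using bij bij_is_inj by blast
  have pinv: "inv \<pi> permutes {..<length as}" using \<pi>(1) permutes_inv by blast
  have injinv: "inj (inv \<pi>)" using pinv permutes_inj by blast
  have imSS: "f ` T \<in> SS k i" if "T \<in> SS k i" "f permutes {..<length as}" "inj f" for T f
  proof -
    have "f ` T \<subseteq> {..<k}" using that permutes_in_image[OF that(2)] las unfolding SS_def by auto
    moreover have "card (f ` T) = card T" using that(3) by (simp add: card_image inj_on_subset)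
    ultimately show ?thesis using that unfolding SS_def by auto
  qed
  define h where "h T = A (nths as T) * B (nths as (-T))" for T
  have "(\<Sum>T\<in>SS k i. A (nths as' T) * B (nths as' (-T))) = (\<Sum>T\<in>SS k i. h (\<pi> ` T))"
  proof (rule sum.cong[OF refl])
    fix T assume T: "T \<in> SS k i"
    have sT: "\<pi> ` T \<subseteq> {..<length as}" "card (\<pi> ` T) = i"
      using imSS[OF T \<pi>(1) inj] las unfolding SS_def by auto
    have "A (nths as' T) = A (nths as (\<pi> ` T))"
      by (rule sA) (use len_nths[OF sT(1)] sT(2) nths_perm_mset[OF \<pi>(1), of T] \<pi>(2) in auto)
    moreover have "B (nths as' (-T)) = B (nths as (- (\<pi> ` T)))"
    proof (rule sB)
      show "length (nths as (- (\<pi> ` T))) = k - i" using len_nths_compl[OF sT(1)] sT(2) las by simp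
      show "mset (nths as' (- T)) = mset (nths as (- (\<pi> ` T)))"
        using nths_perm_mset[OF \<pi>(1), of "-T"] \<pi>(2) bij_image_Compl_eq[OF bij] by simp
    qed
    ultimately show "A (nths as' T) * B (nths as' (-T)) = h (\<pi> ` T)" unfolding h_def by simp
  qed
  also have "\<dots> = sum h (SS k i)"
  proof (rule sum.reindex_bij_witness[where i="\<lambda>T. inv \<pi> ` T" and j="\<lambda>T. \<pi> ` T"])
    fix T assume T: "T \<in> SS k i"
    show "inv \<pi> ` \<pi> ` T = T" using inj by (simp add: image_image)
    show "\<pi> ` inv \<pi> ` T = T" using bij by (simp add: image_image bij_is_surj surj_f_inv_f)
    show "\<pi> ` T \<in> SS k i" by (rule imSS[OF T \<pi>(1) inj])
    show "inv \<pi> ` T \<in> SS k i" by (rule imSS[OF T pinv injinv])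
  qed auto
  finally show ?thesis unfolding h_def .
qed

lemma good_lmult: "good P \<Longrightarrow> P F \<Longrightarrow> P (\<lambda>x. c * F x)"
  unfolding good_def by blast
lemma good_rmult: "good P \<Longrightarrow> P F \<Longrightarrow> P (\<lambda>x. F x * c)"
  unfolding good_def by blast

lemma prod_slot_es:
  fixes \<omega> \<eta> :: "nat \<Rightarrow> 'e list \<Rightarrow> 'o list \<Rightarrow> 'r::comm_ring_1" and Pr :: "('e \<Rightarrow> 'r) \<Rightarrow> bool"
  assumes g: "good Pr" and les: "length es = p + q - 2*k" and las: "length as = k" and j: "j < length es"
    and H\<omega>: "\<And>i X Z c. i \<le> k \<Longrightarrow> i \<le> p div 2 \<Longrightarrow> k - i \<le> q div 2 \<Longrightarrow> length X = p - 2*i \<Longrightarrow> length Z = i \<Longrightarrow>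
       c < length X \<Longrightarrow> (Suc j = length es \<Longrightarrow> Suc c = length X) \<Longrightarrow> Pr (\<lambda>x. \<omega> i (X[c:=x]) Z)"
    and H\<eta>: "\<And>i Y Z c. i \<le> k \<Longrightarrow> i \<le> p div 2 \<Longrightarrow> k - i \<le> q div 2 \<Longrightarrow> length Y = q - 2*(k-i) \<Longrightarrow> length Z = k - i \<Longrightarrow>
       c < length Y \<Longrightarrow> (Suc j = length es \<Longrightarrow> Suc c = length Y) \<Longrightarrow> Pr (\<lambda>x. \<eta> (k-i) (Y[c:=x]) Z)"
  shows "Pr (\<lambda>x. cprod p \<omega> q \<eta> k (es[j:=x]) as)"
proof -
  have "Pr (\<lambda>x. \<Sum>i | i \<le> k \<and> i \<le> p div 2 \<and> k - i \<le> q div 2.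
     Sh (p - 2*i) (\<lambda>X Y. \<Sum>T\<in>SS k i. \<omega> i X (nths as T) * \<eta> (k-i) Y (nths as (-T))) (es[j:=x]))"
  proof (rule good_sum[OF g])
    show "finite {i. i \<le> k \<and> i \<le> p div 2 \<and> k - i \<le> q div 2}" by simp
    fix i assume "i \<in> {i. i \<le> k \<and> i \<le> p div 2 \<and> k - i \<le> q div 2}"
    hence i: "i \<le> k" "i \<le> p div 2" "k - i \<le> q div 2" by auto
    have nb: "length es - (p - 2*i) = q - 2*(k-i)" using les i by auto
    show "Pr (\<lambda>x. Sh (p - 2*i) (\<lambda>X Y. \<Sum>T\<in>SS k i. \<omega> i X (nths as T) * \<eta> (k-i) Y (nths as (-T))) (es[j:=x]))"
      unfolding Sh_def length_list_update
    proof (rule sum_slot[OF g j])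
      fix U :: "nat set" and Z Z' :: "'e list" and c :: nat assume U: "U \<in> SS (length es) (p - 2*i)" and lZ: "length Z = p - 2*i"
        and lZ': "length Z' = length es - (p - 2*i)" and c: "c < p - 2*i"
        and last: "Suc j = length es \<Longrightarrow> Suc c = p - 2*i"
      show "Pr (\<lambda>x. of_int (ps (p - 2*i) U) * (\<Sum>T\<in>SS k i. \<omega> i (Z[c:=x]) (nths as T) * \<eta> (k-i) Z' (nths as (-T))))"
      proof (rule good_lmult[OF g], rule good_sum[OF g finite_SS], rule good_rmult[OF g], rule H\<omega>[OF i lZ])
        fix T assume "T \<in> SS k i"
        thus "length (nths as T) = i" using len_nths las unfolding SS_def by auto
      qed (use c last lZ in auto)
    next
      fix U :: "nat set" and Z Z' :: "'e list" and c :: nat assume U: "U \<in> SS (length es) (p - 2*i)" and lZ: "length Z = p - 2*i"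
        and lZ': "length Z' = length es - (p - 2*i)" and c: "c < length es - (p - 2*i)"
        and last: "Suc j = length es \<Longrightarrow> Suc c = length es - (p - 2*i)"
      have lZ'': "length Z' = q - 2*(k-i)" using lZ' nb by simp
      show "Pr (\<lambda>x. of_int (ps (p - 2*i) U) * (\<Sum>T\<in>SS k i. \<omega> i Z (nths as T) * \<eta> (k-i) (Z'[c:=x]) (nths as (-T))))"
      proof (rule good_lmult[OF g], rule good_sum[OF g finite_SS], rule good_lmult[OF g], rule H\<eta>[OF i lZ''])
        fix T assume "T \<in> SS k i"
        thus "length (nths as (-T)) = k - i" using len_nths_compl las unfolding SS_def by auto
      qed (use c last lZ' nb in auto)
    qed
  qed
  thus ?thesis
    by (rule good_cong[where P=Pr]) (simp add: cprod_alt les las)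
qed

lemma prod_slot_as:
  fixes \<omega> \<eta> :: "nat \<Rightarrow> 'e list \<Rightarrow> 'o list \<Rightarrow> 'r::comm_ring_1" and Pr :: "('o \<Rightarrow> 'r) \<Rightarrow> bool"
  assumes g: "good Pr" and les: "length es = p + q - 2*k" and las: "length as = k" and j: "j < k"
    and H\<omega>: "\<And>i X Z c. i \<le> k \<Longrightarrow> i \<le> p div 2 \<Longrightarrow> k - i \<le> q div 2 \<Longrightarrow> length X = p - 2*i \<Longrightarrow> length Z = i \<Longrightarrow>
       c < i \<Longrightarrow> Pr (\<lambda>x. \<omega> i X (Z[c:=x]))"
    and H\<eta>: "\<And>i Y Z c. i \<le> k \<Longrightarrow> i \<le> p div 2 \<Longrightarrow> k - i \<le> q div 2 \<Longrightarrow> length Y = q - 2*(k-i) \<Longrightarrow> length Z = k - i \<Longrightarrow>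
       c < k - i \<Longrightarrow> Pr (\<lambda>x. \<eta> (k-i) Y (Z[c:=x]))"
  shows "Pr (\<lambda>x. cprod p \<omega> q \<eta> k es (as[j:=x]))"
proof -
  have "Pr (\<lambda>x. \<Sum>i | i \<le> k \<and> i \<le> p div 2 \<and> k - i \<le> q div 2.
     Sh (p - 2*i) (\<lambda>X Y. \<Sum>T\<in>SS k i. \<omega> i X (nths (as[j:=x]) T) * \<eta> (k-i) Y (nths (as[j:=x]) (-T))) es)"
  proof (rule good_sum[OF g])
    show "finite {i. i \<le> k \<and> i \<le> p div 2 \<and> k - i \<le> q div 2}" by simp
    fix i assume "i \<in> {i. i \<le> k \<and> i \<le> p div 2 \<and> k - i \<le> q div 2}"
    hence i: "i \<le> k" "i \<le> p div 2" "k - i \<le> q div 2" by auto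
    show "Pr (\<lambda>x. Sh (p - 2*i) (\<lambda>X Y. \<Sum>T\<in>SS k i. \<omega> i X (nths (as[j:=x]) T) * \<eta> (k-i) Y (nths (as[j:=x]) (-T))) es)"
      unfolding Sh_def
    proof (rule good_sum[OF g finite_SS], rule good_lmult[OF g])
      fix U assume U: "U \<in> SS (length es) (p - 2*i)"
      have Us: "U \<subseteq> {..<length es}" "card U = p - 2*i" using U unfolding SS_def by auto
      have lX: "length (nths es U) = p - 2*i" using len_nths Us by metis
      have lY: "length (nths es (-U)) = q - 2*(k-i)" using len_nths_compl[OF Us(1)] Us(2) les i by auto
      have jk: "j < length as" using j las by simp
      show "Pr (\<lambda>x. \<Sum>T\<in>SS k i. \<omega> i (nths es U) (nths (as[j:=x]) T) * \<eta> (k-i) (nths es (-U)) (nths (as[j:=x]) (-T)))"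
        using sum_slot[OF g jk, of i "\<lambda>T Z Z'. \<omega> i (nths es U) Z * \<eta> (k-i) (nths es (-U)) Z'"] las
          good_rmult[OF g H\<omega>[OF i lX]] good_lmult[OF g H\<eta>[OF i lY]]
        by simp
    qed
  qed
  thus ?thesis
    by (rule good_cong[where P=Pr]) (simp add: cprod_alt les las)
qed

lemma Sh_add: "Sh a (\<lambda>X Y. F X Y + G X Y) xs = Sh a F xs + Sh a G xs"
  unfolding Sh_def by (simp add: sum.distrib distrib_left)

lemma Sh_neg: "Sh a (\<lambda>X Y. - F X Y) xs = - Sh a F xs"
  unfolding Sh_def by (simp add: sum_negf)

lemma Sh_if: "Sh a (\<lambda>X Y. if c then F X Y else 0) xs = (if c then Sh a F xs else 0)"
  unfolding Sh_def by simp

lemma Sh_cong: "(\<And>X Y. length X = a \<Longrightarrow> length Y = length xs - a \<Longrightarrow> F X Y = G X Y) \<Longrightarrow> Sh a F xs = Sh a G xs"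
  unfolding Sh_def
proof (rule sum.cong[OF refl])
  fix S assume H: "\<And>X Y. length X = a \<Longrightarrow> length Y = length xs - a \<Longrightarrow> F X Y = G X Y"
    and S: "S \<in> SS (length xs) a"
  have Ss: "S \<subseteq> {..<length xs}" "card S = a" using S unfolding SS_def by auto
  show "of_int (ps a S) * F (nths xs S) (nths xs (-S)) = of_int (ps a S) * G (nths xs S) (nths xs (-S))"
    using H[of "nths xs S" "nths xs (-S)"] len_nths[OF Ss(1)] len_nths_compl[OF Ss(1)] Ss(2) by simp
qed

lemma SS_empty: "k < c \<Longrightarrow> SS k c = {}"
proof -
  assume kc: "k < c"
  have "T \<notin> SS k c" for T
  proof
    assume "T \<in> SS k c"
    hence "T \<subseteq> {..<k}" "card T = c" unfolding SS_def by auto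
    hence "c \<le> k" using card_mono[of "{..<k}" T] by auto
    thus False using kc by simp
  qed
  thus ?thesis by blast
qed

lemma prod_skew:
  fixes \<omega> \<eta> :: "nat \<Rightarrow> 'e list \<Rightarrow> 'o list \<Rightarrow> 'r::comm_ring_1" and d :: "'x \<Rightarrow> 'o" and pr :: "'e \<Rightarrow> 'e \<Rightarrow> 'x"
  assumes les: "length es = p + q - 2*k" and las: "length as = k" and j: "Suc j < length es"
    and H\<omega>: "\<And>i X Z l. i \<le> p div 2 \<Longrightarrow> length X = p - 2*i \<Longrightarrow> length Z = i \<Longrightarrow> Suc l < length X \<Longrightarrow>
        \<omega> i X Z + \<omega> i (X[l:=X!Suc l, Suc l:=X!l]) Z = - \<omega> (Suc i) (take l X @ drop (Suc (Suc l)) X) (d (pr (X!l) (X!Suc l)) # Z)"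
    and H\<eta>: "\<And>i X Z l. i \<le> q div 2 \<Longrightarrow> length X = q - 2*i \<Longrightarrow> length Z = i \<Longrightarrow> Suc l < length X \<Longrightarrow>
        \<eta> i X Z + \<eta> i (X[l:=X!Suc l, Suc l:=X!l]) Z = - \<eta> (Suc i) (take l X @ drop (Suc (Suc l)) X) (d (pr (X!l) (X!Suc l)) # Z)"
  shows "cprod p \<omega> q \<eta> k es as + cprod p \<omega> q \<eta> k (es[j := es!Suc j, Suc j := es!j]) as =
     - cprod p \<omega> q \<eta> (Suc k) (take j es @ drop (Suc (Suc j)) es) (d (pr (es!j) (es!Suc j)) # as)"
proof -
  define L where "L = take j es"
  define R where "R = drop (Suc (Suc j)) es"
  define u where "u = es!j"
  define v where "v = es!Suc j"
  define \<alpha> where "\<alpha> = d (pr u v)"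
  have lL: "length L = j" unfolding L_def using j by simp
  have esd: "es = L @ [u,v] @ R" unfolding L_def R_def u_def v_def using j
    by (simp add: Cons_nth_drop_Suc)
  have es'd: "es[j := es!Suc j, Suc j := es!j] = L @ [v,u] @ R"
    unfolding u_def[symmetric] v_def[symmetric] by (subst esd) (simp add: list_update_append lL)
  have lLR: "length (L @ R) = p + q - 2 * Suc k" using les j unfolding L_def R_def by auto
  define cnd where "cnd k' i \<longleftrightarrow> i \<le> k' \<and> i \<le> p div 2 \<and> k' - i \<le> q div 2" for k' i
  define W where "W i X Y = (\<Sum>T\<in>SS k i. \<omega> i X (nths as T) * \<eta> (k-i) Y (nths as (-T)))" for i X Y
  define G1 where "G1 i u v X Y = - (\<Sum>T\<in>SS k i. \<omega> (Suc i) X (d (pr u v) # nths as T) * \<eta> (k-i) Y (nths as (-T)))" for i u v X Y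
  define G2 where "G2 i u v X Y = - (\<Sum>T\<in>SS k i. \<omega> i X (nths as T) * \<eta> (Suc (k-i)) Y (d (pr u v) # nths as (-T)))" for i u v X Y
  define A where "A i = (if 2 \<le> p - 2*i then Sh (p - 2*i - 2) (G1 i u v) (L@R) else 0)" for i
  define B where "B i = (if 2 \<le> q - 2*(k-i) then Sh (p - 2*i) (G2 i u v) (L@R) else 0)" for i
  define F1 where "F1 i X Y = (\<Sum>T\<in>SS k (i-1). \<omega> i X (\<alpha> # nths as T) * \<eta> (Suc k - i) Y (nths as (-T)))" for i X Y
  define F2 where "F2 i X Y = (\<Sum>T\<in>SS k i. \<omega> i X (nths as T) * \<eta> (Suc k - i) Y (\<alpha> # nths as (-T)))" for i X Y
  define g where "g i = Sh (p - 2*i) (\<lambda>X Y. - F1 i X Y) (L@R)" for i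
  define h where "h i = Sh (p - 2*i) (\<lambda>X Y. - F2 i X Y) (L@R)" for i
  have ca: "cprod p \<omega> q \<eta> k xs as = (\<Sum>i | cnd k i. Sh (p - 2*i) (W i) xs)" if "length xs = p + q - 2*k" for xs
    unfolding cnd_def W_def by (rule cprod_alt[OF that las])
  have L1: "Sh (p - 2*i) (W i) es + Sh (p - 2*i) (W i) (es[j := es!Suc j, Suc j := es!j]) = A i + B i"
    if ci: "cnd k i" for i
  proof -
    have i: "i \<le> k" "2*i \<le> p" "2*(k-i) \<le> q" using ci unfolding cnd_def by auto
    have lens: "length L + 2 + length R = (p - 2*i) + (q - 2*(k-i))" using les esd i by auto
    have "Sh (p - 2*i) (W i) (L@[u,v]@R) + Sh (p - 2*i) (W i) (L@[v,u]@R) =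
      (if 2 \<le> p - 2*i then Sh (p - 2*i - 2) (G1 i u v) (L@R) else 0) +
      (if 2 \<le> q - 2*(k-i) then Sh (p - 2*i) (G2 i u v) (L@R) else 0)"
    proof (rule Sh_skew[OF lens])
      fix X Y :: "'e list" and l :: nat assume lX: "length X = p - 2*i" and lY: "length Y = q - 2*(k-i)" and l: "Suc l < p - 2*i"
      have "W i X Y + W i (X[l := X!Suc l, Suc l := X!l]) Y =
         (\<Sum>T\<in>SS k i. (\<omega> i X (nths as T) + \<omega> i (X[l := X!Suc l, Suc l := X!l]) (nths as T)) * \<eta> (k-i) Y (nths as (-T)))"
        unfolding W_def by (simp add: sum.distrib distrib_right)
      also have "\<dots> = (\<Sum>T\<in>SS k i. (- \<omega> (Suc i) (take l X @ drop (Suc (Suc l)) X) (d (pr (X!l) (X!Suc l)) # nths as T)) * \<eta> (k-i) Y (nths as (-T)))"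
      proof (rule sum.cong[OF refl])
        fix T assume "T \<in> SS k i"
        hence "length (nths as T) = i" using len_nths las unfolding SS_def by auto
        thus "(\<omega> i X (nths as T) + \<omega> i (X[l := X!Suc l, Suc l := X!l]) (nths as T)) * \<eta> (k-i) Y (nths as (-T)) =
          (- \<omega> (Suc i) (take l X @ drop (Suc (Suc l)) X) (d (pr (X!l) (X!Suc l)) # nths as T)) * \<eta> (k-i) Y (nths as (-T))"
          using H\<omega>[of i X "nths as T" l] i lX l by simp
      qed
      finally show "W i X Y + W i (X[l := X!Suc l, Suc l := X!l]) Y = G1 i (X!l) (X!Suc l) (take l X @ drop (Suc (Suc l)) X) Y"
        unfolding G1_def by (simp add: sum_negf)
    next
      fix X Y :: "'e list" and l :: nat assume lX: "length X = p - 2*i" and lY: "length Y = q - 2*(k-i)" and l: "Suc l < q - 2*(k-i)"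
      have "W i X Y + W i X (Y[l := Y!Suc l, Suc l := Y!l]) =
         (\<Sum>T\<in>SS k i. \<omega> i X (nths as T) * (\<eta> (k-i) Y (nths as (-T)) + \<eta> (k-i) (Y[l := Y!Suc l, Suc l := Y!l]) (nths as (-T))))"
        unfolding W_def by (simp add: sum.distrib distrib_left)
      also have "\<dots> = (\<Sum>T\<in>SS k i. \<omega> i X (nths as T) * (- \<eta> (Suc (k-i)) (take l Y @ drop (Suc (Suc l)) Y) (d (pr (Y!l) (Y!Suc l)) # nths as (-T))))"
      proof (rule sum.cong[OF refl])
        fix T assume "T \<in> SS k i"
        hence "length (nths as (-T)) = k - i" using len_nths_compl las unfolding SS_def by auto
        thus "\<omega> i X (nths as T) * (\<eta> (k-i) Y (nths as (-T)) + \<eta> (k-i) (Y[l := Y!Suc l, Suc l := Y!l]) (nths as (-T))) =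
           \<omega> i X (nths as T) * (- \<eta> (Suc (k-i)) (take l Y @ drop (Suc (Suc l)) Y) (d (pr (Y!l) (Y!Suc l)) # nths as (-T)))"
          using H\<eta>[of "k-i" Y "nths as (-T)" l] i lY l by simp
      qed
      finally show "W i X Y + W i X (Y[l := Y!Suc l, Suc l := Y!l]) = G2 i (Y!l) (Y!Suc l) X (take l Y @ drop (Suc (Suc l)) Y)"
        unfolding G2_def by (simp add: sum_negf)
    qed
    thus ?thesis unfolding A_def B_def esd[symmetric] es'd[symmetric] .
  qed
  have LHS: "cprod p \<omega> q \<eta> k es as + cprod p \<omega> q \<eta> k (es[j := es!Suc j, Suc j := es!j]) as
      = (\<Sum>i | cnd k i. A i) + (\<Sum>i | cnd k i. B i)"
    using ca[OF les] ca[of "es[j := es!Suc j, Suc j := es!j]"] les L1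
    by (simp add: sum.distrib[symmetric])
  have R1: "- Sh (p - 2*i) (\<lambda>X Y. \<Sum>T\<in>SS (Suc k) i. \<omega> i X (nths (\<alpha>#as) T) * \<eta> (Suc k - i) Y (nths (\<alpha>#as) (-T))) (L@R)
     = (if 1 \<le> i then g i else 0) + h i" for i
  proof -
    have "(\<lambda>X Y. \<Sum>T\<in>SS (Suc k) i. \<omega> i X (nths (\<alpha>#as) T) * \<eta> (Suc k - i) Y (nths (\<alpha>#as) (-T)))
        = (\<lambda>X Y. (if 1 \<le> i then F1 i X Y else 0) + F2 i X Y)"
    proof (intro ext)
      fix X Y :: "'e list"
      show "(\<Sum>T\<in>SS (Suc k) i. \<omega> i X (nths (\<alpha>#as) T) * \<eta> (Suc k - i) Y (nths (\<alpha>#as) (-T)))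
        = (if 1 \<le> i then F1 i X Y else 0) + F2 i X Y"
        unfolding F1_def F2_def
        using SS_Suc_split[OF las, where c=i and \<alpha>=\<alpha> and H="\<lambda>Z Z'. \<omega> i X Z * \<eta> (Suc k - i) Y Z'"]
        by simp
    qed
    thus ?thesis
    proof (cases "1 \<le> i")
      case True
      assume e: "(\<lambda>X Y. \<Sum>T\<in>SS (Suc k) i. \<omega> i X (nths (\<alpha>#as) T) * \<eta> (Suc k - i) Y (nths (\<alpha>#as) (-T)))
        = (\<lambda>X Y. (if 1 \<le> i then F1 i X Y else 0) + F2 i X Y)"
      show ?thesis unfolding e using True by (simp add: Sh_add Sh_neg g_def h_def)
    next
      case False
      assume e: "(\<lambda>X Y. \<Sum>T\<in>SS (Suc k) i. \<omega> i X (nths (\<alpha>#as) T) * \<eta> (Suc k - i) Y (nths (\<alpha>#as) (-T)))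
        = (\<lambda>X Y. (if 1 \<le> i then F1 i X Y else 0) + F2 i X Y)"
      show ?thesis unfolding e using False by (simp add: Sh_neg g_def h_def)
    qed
  qed
  have RHS: "- cprod p \<omega> q \<eta> (Suc k) (L@R) (\<alpha> # as) = (\<Sum>i | cnd (Suc k) i. (if 1 \<le> i then g i else 0)) + (\<Sum>i | cnd (Suc k) i. h i)"
  proof -
    have "cprod p \<omega> q \<eta> (Suc k) (L@R) (\<alpha> # as) = (\<Sum>i | cnd (Suc k) i.
       Sh (p - 2*i) (\<lambda>X Y. \<Sum>T\<in>SS (Suc k) i. \<omega> i X (nths (\<alpha>#as) T) * \<eta> (Suc k - i) Y (nths (\<alpha>#as) (-T))) (L@R))"
      unfolding cnd_def using cprod_alt[OF lLR, of "\<alpha>#as"] las by simp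
    thus ?thesis using R1 by (simp add: sum_negf[symmetric] sum.distrib)
  qed
  have filt: "(\<Sum>i | cnd k' i. f i) = (\<Sum>i\<le>k'. if cnd k' i then f i else 0)" for k' and f :: "nat \<Rightarrow> 'r"
  proof -
    have "{i. cnd k' i} = {i\<in>{..k'}. cnd k' i}" unfolding cnd_def by auto
    thus ?thesis using sum.inter_filter[of "{..k'}" f "cnd k'"] by simp
  qed
  have C1: "(\<Sum>i | cnd k i. A i) = (\<Sum>i | cnd (Suc k) i. (if 1 \<le> i then g i else 0))"
  proof -
    have "(\<Sum>i | cnd (Suc k) i. (if 1 \<le> i then g i else 0)) = (\<Sum>i\<le>Suc k. if cnd (Suc k) i then (if 1 \<le> i then g i else 0) else 0)"
      by (rule filt)
    also have "\<dots> = (\<Sum>i\<le>k. if cnd (Suc k) (Suc i) then g (Suc i) else 0)"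
      by (subst sum.atMost_Suc_shift) (auto intro!: sum.cong)
    also have "\<dots> = (\<Sum>i\<le>k. if cnd k i then A i else 0)"
    proof (rule sum.cong[OF refl])
      fix i assume "i \<in> {..k}"
      show "(if cnd (Suc k) (Suc i) then g (Suc i) else 0) = (if cnd k i then A i else 0)"
      proof (cases "cnd k i \<and> 2 \<le> p - 2*i")
        case True
        hence c: "cnd (Suc k) (Suc i)" unfolding cnd_def by auto
        have "G1 i u v = (\<lambda>X Y. - F1 (Suc i) X Y)"
          unfolding G1_def F1_def \<alpha>_def by (intro ext) simp
        moreover have "p - 2*i - 2 = p - 2 * Suc i" by simp
        ultimately have "A i = g (Suc i)" using True unfolding A_def g_def by simp
        thus ?thesis using c True by simp
      next
        case False
        hence "\<not> cnd (Suc k) (Suc i)" unfolding cnd_def by auto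
        thus ?thesis using False unfolding A_def by auto
      qed
    qed
    finally show ?thesis using filt[where k'=k and f=A] by simp
  qed
  have C2: "(\<Sum>i | cnd k i. B i) = (\<Sum>i | cnd (Suc k) i. h i)"
  proof -
    have h0: "h (Suc k) = 0" unfolding h_def F2_def Sh_def using SS_empty[of k "Suc k"] by simp
    have "(\<Sum>i | cnd (Suc k) i. h i) = (\<Sum>i\<le>Suc k. if cnd (Suc k) i then h i else 0)"
      by (rule filt)
    also have "\<dots> = (\<Sum>i\<le>k. if cnd (Suc k) i then h i else 0)"
      using h0 by simp
    also have "\<dots> = (\<Sum>i\<le>k. if cnd k i then B i else 0)"
    proof (rule sum.cong[OF refl])
      fix i assume "i \<in> {..k}"
      hence ik: "i \<le> k" by simp
      show "(if cnd (Suc k) i then h i else 0) = (if cnd k i then B i else 0)"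
      proof (cases "cnd k i \<and> 2 \<le> q - 2*(k-i)")
        case True
        hence c: "cnd (Suc k) i" unfolding cnd_def by auto
        have "G2 i u v = (\<lambda>X Y. - F2 i X Y)"
          unfolding G2_def F2_def \<alpha>_def using ik by (intro ext) (simp add: Suc_diff_le)
        hence "B i = h i" using True unfolding B_def h_def by simp
        thus ?thesis using c True by simp
      next
        case False
        hence "\<not> cnd (Suc k) i" using ik unfolding cnd_def by auto
        thus ?thesis using False unfolding B_def by auto
      qed
    qed
    finally show ?thesis using filt[where k'=k and f=B] by simp
  qed
  show ?thesis
    unfolding LHS C1 C2 RHS[symmetric] L_def[symmetric] R_def[symmetric] \<alpha>_def u_def v_def ..
qed

lemma inD_facts:
  fixes sE :: "'r::{comm_ring_1,real_algebra_1} \<Rightarrow> 'e::ab_group_add \<Rightarrow> 'e" and sO :: "'r \<Rightarrow> 'o::ab_group_add \<Rightarrow> 'o" and X :: "'e list" and Z :: "'o list"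
  assumes D: "in_D sE sO d pair p m \<omega>" and i: "i \<le> p div 2" and lX: "length X = p - 2*i" and lZ: "length Z = i"
  shows "c < length X \<Longrightarrow> linP sE (\<lambda>x. \<omega> i (X[c:=x]) Z)"
    and "c < length Z \<Longrightarrow> linP sO (\<lambda>a. \<omega> i X (Z[c:=a]))"
    and "mset Z' = mset Z \<Longrightarrow> \<omega> i X Z' = \<omega> i X Z"
    and "Suc l < length X \<Longrightarrow> \<omega> i X Z + \<omega> i (X[l:=X!Suc l, Suc l:=X!l]) Z =
           - \<omega> (Suc i) (take l X @ drop (Suc (Suc l)) X) (d (pair (X!l) (X!Suc l)) # Z)"
    and "c < length X \<Longrightarrow> has_order sE (if Suc c = length X then m - 1 else m) (\<lambda>x. \<omega> i (X[c:=x]) Z)"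
    and "c < length Z \<Longrightarrow> has_order sO m (\<lambda>a. \<omega> i X (Z[c:=a]))"
proof -
  have co: "is_cochain sE sO d pair p \<omega>" using D unfolding in_D_def by blast
  have ord: "\<forall>k \<le> p div 2. \<forall>es as. length es = p - 2*k \<and> length as = k \<longrightarrow>
       (\<forall>i < length as. has_order sO m (\<lambda>a. \<omega> k es (as[i := a]))) \<and>
       (\<forall>i < length es. has_order sE (if i + 1 = length es then m - 1 else m) (\<lambda>x. \<omega> k (es[i := x]) as))"
    using D unfolding in_D_def by blast
  note C = co[unfolded is_cochain_def, rule_format, OF i conjI[OF lX lZ]]
  note O = ord[rule_format, OF i conjI[OF lX lZ]]
  note C1 = C[THEN conjunct1] and C2 = C[THEN conjunct2, THEN conjunct1]
    and C3 = C[THEN conjunct2, THEN conjunct2, THEN conjunct1]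
    and C4 = C[THEN conjunct2, THEN conjunct2, THEN conjunct2]
  note O1 = O[THEN conjunct1] and O2 = O[THEN conjunct2]
  show "c < length X \<Longrightarrow> linP sE (\<lambda>x. \<omega> i (X[c:=x]) Z)"
  proof -
    assume c: "c < length X"
    note e = C1[rule_format, OF c]
    show ?thesis unfolding linP_def using e by simp
  qed
  show "c < length Z \<Longrightarrow> linP sO (\<lambda>a. \<omega> i X (Z[c:=a]))"
  proof -
    assume c: "c < length Z"
    note e = C2[rule_format, OF c]
    show ?thesis unfolding linP_def using e by simp
  qed
  show "mset Z' = mset Z \<Longrightarrow> \<omega> i X Z' = \<omega> i X Z"
    using C3 by blast
  show "Suc l < length X \<Longrightarrow> \<omega> i X Z + \<omega> i (X[l:=X!Suc l, Suc l:=X!l]) Z =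
           - \<omega> (Suc i) (take l X @ drop (Suc (Suc l)) X) (d (pair (X!l) (X!Suc l)) # Z)"
  proof -
    assume l: "Suc l < length X"
    hence "l + 1 < p - 2*i" using lX by simp
    note e = C4[rule_format, OF this]
    thus ?thesis by simp
  qed
  show "c < length X \<Longrightarrow> has_order sE (if Suc c = length X then m - 1 else m) (\<lambda>x. \<omega> i (X[c:=x]) Z)"
  proof -
    assume c: "c < length X"
    note e = O2[rule_format, OF c]
    thus ?thesis by simp
  qed
  show "c < length Z \<Longrightarrow> has_order sO m (\<lambda>a. \<omega> i X (Z[c:=a]))"
  proof -
    assume c: "c < length Z"
    note e = O1[rule_format, OF c]
    thus ?thesis by simp
  qed
qed

theorem mainTheorem4:
  fixes sE :: "'r::{comm_ring_1,real_algebra_1} \<Rightarrow> 'e::ab_group_add \<Rightarrow> 'e"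
    and sO :: "'r \<Rightarrow> 'o::ab_group_add \<Rightarrow> 'o"
    and d :: "'r \<Rightarrow> 'o" and pair :: "'e \<Rightarrow> 'e \<Rightarrow> 'r"
    and \<omega> \<eta> :: "nat \<Rightarrow> 'e list \<Rightarrow> 'o list \<Rightarrow> 'r"
    and p q m n :: nat
  assumes "CD_data sE sO d pair"
    and "1 \<le> m" and "1 \<le> n"
    and "in_D sE sO d pair p m \<omega>"
    and "in_D sE sO d pair q n \<eta>"
  shows "in_D sE sO d pair (p + q) (max m n) (cprod p \<omega> q \<eta>)"
proof -
  note o = inD_facts[OF assms(4)] and h = inD_facts[OF assms(5)]
  let ?P = "cprod p \<omega> q \<eta>"
  let ?M = "max m n"
  have main: "(\<forall>i < length es.
          (\<forall>x y. ?P k (es[i := x + y]) as = ?P k (es[i := x]) as + ?P k (es[i := y]) as) \<and>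
          (\<forall>c x. ?P k (es[i := sE (of_real c) x]) as = of_real c * ?P k (es[i := x]) as)) \<and>
       (\<forall>i < length as.
          (\<forall>x y. ?P k es (as[i := x + y]) = ?P k es (as[i := x]) + ?P k es (as[i := y])) \<and>
          (\<forall>c x. ?P k es (as[i := sO (of_real c) x]) = of_real c * ?P k es (as[i := x]))) \<and>
       (\<forall>as'. mset as' = mset as \<longrightarrow> ?P k es as' = ?P k es as) \<and>
       (\<forall>i. i + 1 < p + q - 2*k \<longrightarrow>
          ?P k es as + ?P k (es[i := es ! (i+1), i+1 := es ! i]) as =
          - ?P (k+1) (take i es @ drop (i+2) es) (d (pair (es ! i) (es ! (i+1))) # as))"
    and ords: "(\<forall>i < length as. has_order sO ?M (\<lambda>a. ?P k es (as[i := a]))) \<and>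
       (\<forall>i < length es. has_order sE (if i + 1 = length es then ?M - 1 else ?M) (\<lambda>x. ?P k (es[i := x]) as))"
    if les: "length es = p + q - 2*k" and las: "length as = k" for k :: nat and es :: "'e list" and as :: "'o list"
  proof -
    have linE: "linP sE (\<lambda>x. ?P k (es[j:=x]) as)" if j: "j < length es" for j
    proof (rule prod_slot_es[OF good_lin les las j])
      fix i c :: nat and X :: "'e list" and Z :: "'o list" assume i: "i \<le> k" "i \<le> p div 2" "k - i \<le> q div 2" and lX: "length X = p - 2*i" and lZ: "length Z = i"
        and c: "c < length X"
      show "linP sE (\<lambda>x. \<omega> i (X[c:=x]) Z)" by (rule o(1)[OF i(2) lX lZ c])
    next
      fix i c :: nat and Y :: "'e list" and Z :: "'o list" assume i: "i \<le> k" "i \<le> p div 2" "k - i \<le> q div 2" and lY: "length Y = q - 2*(k-i)" and lZ: "length Z = k - i"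
        and c: "c < length Y"
      show "linP sE (\<lambda>x. \<eta> (k-i) (Y[c:=x]) Z)" by (rule h(1)[OF i(3) lY lZ c])
    qed
    have ordE: "has_order sE (if Suc j = length es then ?M - 1 else ?M) (\<lambda>x. ?P k (es[j:=x]) as)" if j: "j < length es" for j
    proof (rule prod_slot_es[OF good_order les las j])
      fix i c :: nat and X :: "'e list" and Z :: "'o list" assume i: "i \<le> k" "i \<le> p div 2" "k - i \<le> q div 2" and lX: "length X = p - 2*i" and lZ: "length Z = i"
        and c: "c < length X" and last: "Suc j = length es \<Longrightarrow> Suc c = length X"
      show "has_order sE (if Suc j = length es then ?M - 1 else ?M) (\<lambda>x. \<omega> i (X[c:=x]) Z)"
        by (rule has_order_mono[OF o(5)[OF i(2) lX lZ c]]) (use last in auto)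
    next
      fix i c :: nat and Y :: "'e list" and Z :: "'o list" assume i: "i \<le> k" "i \<le> p div 2" "k - i \<le> q div 2" and lY: "length Y = q - 2*(k-i)" and lZ: "length Z = k - i"
        and c: "c < length Y" and last: "Suc j = length es \<Longrightarrow> Suc c = length Y"
      show "has_order sE (if Suc j = length es then ?M - 1 else ?M) (\<lambda>x. \<eta> (k-i) (Y[c:=x]) Z)"
        by (rule has_order_mono[OF h(5)[OF i(3) lY lZ c]]) (use last in auto)
    qed
    have linO: "linP sO (\<lambda>x. ?P k es (as[j:=x]))" if j: "j < k" for j
    proof (rule prod_slot_as[OF good_lin les las j])
      fix i c :: nat and X :: "'e list" and Z :: "'o list" assume i: "i \<le> k" "i \<le> p div 2" "k - i \<le> q div 2" and lX: "length X = p - 2*i" and lZ: "length Z = i"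
        and c: "c < i"
      show "linP sO (\<lambda>x. \<omega> i X (Z[c:=x]))" by (rule o(2)) (use i lX lZ c in auto)
    next
      fix i c :: nat and Y :: "'e list" and Z :: "'o list" assume i: "i \<le> k" "i \<le> p div 2" "k - i \<le> q div 2" and lY: "length Y = q - 2*(k-i)" and lZ: "length Z = k - i"
        and c: "c < k - i"
      show "linP sO (\<lambda>x. \<eta> (k-i) Y (Z[c:=x]))" by (rule h(2)) (use i lY lZ c in auto)
    qed
    have ordO: "has_order sO ?M (\<lambda>x. ?P k es (as[j:=x]))" if j: "j < k" for j
    proof (rule prod_slot_as[OF good_order les las j])
      fix i c :: nat and X :: "'e list" and Z :: "'o list" assume i: "i \<le> k" "i \<le> p div 2" "k - i \<le> q div 2" and lX: "length X = p - 2*i" and lZ: "length Z = i"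
        and c: "c < i"
      show "has_order sO ?M (\<lambda>x. \<omega> i X (Z[c:=x]))"
        by (rule has_order_mono[OF o(6)]) (use i lX lZ c in auto)
    next
      fix i c :: nat and Y :: "'e list" and Z :: "'o list" assume i: "i \<le> k" "i \<le> p div 2" "k - i \<le> q div 2" and lY: "length Y = q - 2*(k-i)" and lZ: "length Z = k - i"
        and c: "c < k - i"
      show "has_order sO ?M (\<lambda>x. \<eta> (k-i) Y (Z[c:=x]))"
        by (rule has_order_mono[OF h(6)]) (use i lY lZ c in auto)
    qed
    have msetP: "?P k es as' = ?P k es as" if m': "mset as' = mset as" for as'
    proof -
      have las': "length as' = k" using mset_eq_length[OF m'] las by simp
      show ?thesis unfolding cprod_alt[OF les las] cprod_alt[OF les las']
      proof (rule sum.cong[OF refl], rule Sh_cong)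
        fix i :: nat and X Y :: "'e list" assume "i \<in> {i. i \<le> k \<and> i \<le> p div 2 \<and> k - i \<le> q div 2}"
        hence i: "i \<le> k" "i \<le> p div 2" "k - i \<le> q div 2" by auto
        assume lX: "length X = p - 2*i" and lY: "length Y = length es - (p - 2*i)"
        have lY': "length Y = q - 2*(k-i)" using lY les i by auto
        show "(\<Sum>T\<in>SS k i. \<omega> i X (nths as' T) * \<eta> (k-i) Y (nths as' (-T))) =
              (\<Sum>T\<in>SS k i. \<omega> i X (nths as T) * \<eta> (k-i) Y (nths as (-T)))"
        proof (rule W_mset[OF m' las])
          fix Z Z' :: "'o list" assume "length Z = i" "mset Z' = mset Z"
          thus "\<omega> i X Z' = \<omega> i X Z" using o(3)[OF i(2) lX] by blast
        next
          fix Z Z' :: "'o list" assume "length Z = k - i" "mset Z' = mset Z"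
          thus "\<eta> (k-i) Y Z' = \<eta> (k-i) Y Z" using h(3)[OF i(3) lY'] by blast
        qed
      qed
    qed
    have skew: "?P k es as + ?P k (es[j := es ! (j+1), j+1 := es ! j]) as =
          - ?P (k+1) (take j es @ drop (j+2) es) (d (pair (es ! j) (es ! (j+1))) # as)"
      if j: "j + 1 < p + q - 2*k" for j
    proof -
      have "?P k es as + ?P k (es[j := es!Suc j, Suc j := es!j]) as =
        - ?P (Suc k) (take j es @ drop (Suc (Suc j)) es) (d (pair (es!j) (es!Suc j)) # as)"
      proof (rule prod_skew[OF les las])
        show "Suc j < length es" using j les by simp
      next
        fix i l :: nat and X :: "'e list" and Z :: "'o list" assume "i \<le> p div 2" "length X = p - 2*i" "length Z = i" "Suc l < length X"
        thus "\<omega> i X Z + \<omega> i (X[l:=X!Suc l, Suc l:=X!l]) Z =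
           - \<omega> (Suc i) (take l X @ drop (Suc (Suc l)) X) (d (pair (X!l) (X!Suc l)) # Z)" by (rule o(4))
      next
        fix i l :: nat and X :: "'e list" and Z :: "'o list" assume "i \<le> q div 2" "length X = q - 2*i" "length Z = i" "Suc l < length X"
        thus "\<eta> i X Z + \<eta> i (X[l:=X!Suc l, Suc l:=X!l]) Z =
           - \<eta> (Suc i) (take l X @ drop (Suc (Suc l)) X) (d (pair (X!l) (X!Suc l)) # Z)" by (rule h(4))
      qed
      thus ?thesis by simp
    qed
    show "(\<forall>i < length es.
          (\<forall>x y. ?P k (es[i := x + y]) as = ?P k (es[i := x]) as + ?P k (es[i := y]) as) \<and>
          (\<forall>c x. ?P k (es[i := sE (of_real c) x]) as = of_real c * ?P k (es[i := x]) as)) \<and>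
       (\<forall>i < length as.
          (\<forall>x y. ?P k es (as[i := x + y]) = ?P k es (as[i := x]) + ?P k es (as[i := y])) \<and>
          (\<forall>c x. ?P k es (as[i := sO (of_real c) x]) = of_real c * ?P k es (as[i := x]))) \<and>
       (\<forall>as'. mset as' = mset as \<longrightarrow> ?P k es as' = ?P k es as) \<and>
       (\<forall>i. i + 1 < p + q - 2*k \<longrightarrow>
          ?P k es as + ?P k (es[i := es ! (i+1), i+1 := es ! i]) as =
          - ?P (k+1) (take i es @ drop (i+2) es) (d (pair (es ! i) (es ! (i+1))) # as))"
    proof (intro conjI)
      show "\<forall>i < length es.
          (\<forall>x y. ?P k (es[i := x + y]) as = ?P k (es[i := x]) as + ?P k (es[i := y]) as) \<and>
          (\<forall>c x. ?P k (es[i := sE (of_real c) x]) as = of_real c * ?P k (es[i := x]) as)"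
      proof (intro allI impI)
        fix i assume "i < length es"
        from linE[OF this] show "(\<forall>x y. ?P k (es[i := x + y]) as = ?P k (es[i := x]) as + ?P k (es[i := y]) as) \<and>
          (\<forall>c x. ?P k (es[i := sE (of_real c) x]) as = of_real c * ?P k (es[i := x]) as)"
          unfolding linP_def .
      qed
      show "\<forall>i < length as.
          (\<forall>x y. ?P k es (as[i := x + y]) = ?P k es (as[i := x]) + ?P k es (as[i := y])) \<and>
          (\<forall>c x. ?P k es (as[i := sO (of_real c) x]) = of_real c * ?P k es (as[i := x]))"
      proof (intro allI impI)
        fix i assume "i < length as"
        hence "i < k" using las by simp
        from linO[OF this] show "(\<forall>x y. ?P k es (as[i := x + y]) = ?P k es (as[i := x]) + ?P k es (as[i := y])) \<and>
          (\<forall>c x. ?P k es (as[i := sO (of_real c) x]) = of_real c * ?P k es (as[i := x]))"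
          unfolding linP_def .
      qed
      show "\<forall>as'. mset as' = mset as \<longrightarrow> ?P k es as' = ?P k es as" using msetP by blast
      show "\<forall>i. i + 1 < p + q - 2*k \<longrightarrow>
          ?P k es as + ?P k (es[i := es ! (i+1), i+1 := es ! i]) as =
          - ?P (k+1) (take i es @ drop (i+2) es) (d (pair (es ! i) (es ! (i+1))) # as)"
        using skew by blast
    qed
    show "(\<forall>i < length as. has_order sO ?M (\<lambda>a. ?P k es (as[i := a]))) \<and>
       (\<forall>i < length es. has_order sE (if i + 1 = length es then ?M - 1 else ?M) (\<lambda>x. ?P k (es[i := x]) as))"
    proof (intro conjI allI impI)
      fix i assume "i < length as"
      hence "i < k" using las by simp
      thus "has_order sO ?M (\<lambda>a. ?P k es (as[i := a]))" by (rule ordO)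
    next
      fix i assume "i < length es"
      from ordE[OF this] show "has_order sE (if i + 1 = length es then ?M - 1 else ?M) (\<lambda>x. ?P k (es[i := x]) as)"
        by simp
    qed
  qed
  show ?thesis
    unfolding in_D_def
  proof (intro conjI)
    show "is_cochain sE sO d pair (p + q) ?P" unfolding is_cochain_def
    proof (intro allI impI)
      fix k :: nat and es :: "'e list" and as :: "'o list" assume "k \<le> (p + q) div 2" and l: "length es = p + q - 2*k \<and> length as = k"
      show "(\<forall>i < length es.
          (\<forall>x y. ?P k (es[i := x + y]) as = ?P k (es[i := x]) as + ?P k (es[i := y]) as) \<and>
          (\<forall>c x. ?P k (es[i := sE (of_real c) x]) as = of_real c * ?P k (es[i := x]) as)) \<and>
       (\<forall>i < length as.
          (\<forall>x y. ?P k es (as[i := x + y]) = ?P k es (as[i := x]) + ?P k es (as[i := y])) \<and>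
          (\<forall>c x. ?P k es (as[i := sO (of_real c) x]) = of_real c * ?P k es (as[i := x]))) \<and>
       (\<forall>as'. mset as' = mset as \<longrightarrow> ?P k es as' = ?P k es as) \<and>
       (\<forall>i. i + 1 < p + q - 2*k \<longrightarrow>
          ?P k es as + ?P k (es[i := es ! (i+1), i+1 := es ! i]) as =
          - ?P (k+1) (take i es @ drop (i+2) es) (d (pair (es ! i) (es ! (i+1))) # as))"
        by (rule main) (use l in auto)
    qed
    show "\<forall>k \<le> (p + q) div 2. \<forall>es as. length es = p + q - 2*k \<and> length as = k \<longrightarrow>
       (\<forall>i < length as. has_order sO ?M (\<lambda>a. ?P k es (as[i := a]))) \<and>
       (\<forall>i < length es. has_order sE (if i + 1 = length es then ?M - 1 else ?M) (\<lambda>x. ?P k (es[i := x]) as))"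
    proof (intro allI impI)
      fix k :: nat and es :: "'e list" and as :: "'o list" assume "k \<le> (p + q) div 2" and l: "length es = p + q - 2*k \<and> length as = k"
      show "(\<forall>i < length as. has_order sO ?M (\<lambda>a. ?P k es (as[i := a]))) \<and>
       (\<forall>i < length es. has_order sE (if i + 1 = length es then ?M - 1 else ?M) (\<lambda>x. ?P k (es[i := x]) as))"
        by (rule ords) (use l in auto)
    qed
  qed
qed

end
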